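(* There exists a Lindelöf basically disconnected Hausdorff topological group which is not a $P$-space if and only if there exists a nondiscrete Lindelöf Boolean basically disconnected Hausdorff topological group of countable pseudocharacter.
   Context: All spaces are Tychonoff. A space is basically disconnected if the closure of every cozero set in it is open. A space is a $P$-space if every $G_\delta$-subset is open. For a topological group, countable pseudocharacter means the identity element is a $G_\delta$-set. A group is Boolean if every element has order at most $2$. *)

theory Defs
  imports "HOL-Analysis.Analysis" "HOL-Algebra.Group"
begin

definition topological_group :: "('a, 'b) monoid_scheme \<Rightarrow> 'a topology \<Rightarrow> bool" where
  "topological_group G T \<longleftrightarrow>
     group G \<and> topspace T = carrier G \<and>
     continuous_map (prod_topology T T) T (\<lambda>p. fst p \<otimes>\<^bsub>G\<^esub> snd p) \<and>
     continuous_map T T (\<lambda>x. inv\<^bsub>G\<^esub> x)"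

definition cozero_set_in :: "'a topology \<Rightarrow> 'a set \<Rightarrow> bool" where
  "cozero_set_in T U \<longleftrightarrow>
     (\<exists>f. continuous_map T euclideanreal f \<and> U = {x \<in> topspace T. f x \<noteq> 0})"

definition basically_disconnected :: "'a topology \<Rightarrow> bool" where
  "basically_disconnected T \<longleftrightarrow> (\<forall>U. cozero_set_in T U \<longrightarrow> openin T (T closure_of U))"

definition P_space :: "'a topology \<Rightarrow> bool" where
  "P_space T \<longleftrightarrow> (\<forall>S. gdelta_in T S \<longrightarrow> openin T S)"

definition boolean_group :: "('a, 'b) monoid_scheme \<Rightarrow> bool" where
  "boolean_group G \<longleftrightarrow> (\<forall>x \<in> carrier G. x \<otimes>\<^bsub>G\<^esub> x = \<one>\<^bsub>G\<^esub>)"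

definition countable_pseudocharacter :: "('a, 'b) monoid_scheme \<Rightarrow> 'a topology \<Rightarrow> bool" where
  "countable_pseudocharacter G T \<longleftrightarrow> gdelta_in T {\<one>\<^bsub>G\<^esub>}"

end

theory Submission
  imports Defs "HOL-Algebra.Generated_Groups"
begin


locale tgrp = group G for G (structure) +
  fixes T :: "'a topology"
  assumes tg: "topological_group G T"
begin

lemma topspace_eq [simp]: "topspace T = carrier G"
  using tg by (simp add: topological_group_def)

lemma cont_mult: "continuous_map (prod_topology T T) T (\<lambda>p. fst p \<otimes> snd p)"
  using tg by (simp add: topological_group_def)

lemma cont_inv: "continuous_map T T (\<lambda>x. inv x)"
  using tg by (simp add: topological_group_def)

lemma openin_sub: "openin T U \<Longrightarrow> U \<subseteq> carrier G"
  using openin_subset by fastforce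

lemma mult_nbhd:
  assumes "openin T U" "x \<in> carrier G" "y \<in> carrier G" "x \<otimes> y \<in> U"
  shows "\<exists>A B. openin T A \<and> openin T B \<and> x \<in> A \<and> y \<in> B \<and> (\<forall>a\<in>A. \<forall>b\<in>B. a \<otimes> b \<in> U)"
proof -
  define S where "S = {p \<in> topspace (prod_topology T T). fst p \<otimes> snd p \<in> U}"
  have "openin (prod_topology T T) S"
    unfolding S_def using cont_mult assms(1) by (rule openin_continuous_map_preimage)
  moreover have "(x,y) \<in> S"
    using assms by (simp add: S_def)
  ultimately obtain A B where AB: "openin T A" "openin T B" "x \<in> A" "y \<in> B" "A \<times> B \<subseteq> S"
    unfolding openin_prod_topology_alt by meson
  have "\<forall>a\<in>A. \<forall>b\<in>B. a \<otimes> b \<in> U"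
  proof (intro ballI)
    fix a b assume "a \<in> A" "b \<in> B"
    then have "(a,b) \<in> S" using AB(5) by blast
    then show "a \<otimes> b \<in> U" by (simp add: S_def)
  qed
  with AB show ?thesis by blast
qed

lemma cont_lmult: "a \<in> carrier G \<Longrightarrow> continuous_map T T (\<lambda>x. a \<otimes> x)"
proof -
  assume a: "a \<in> carrier G"
  have "continuous_map T (prod_topology T T) (\<lambda>x. (a, x))"
    using a by (simp add: continuous_map_paired)
  from continuous_map_compose[OF this cont_mult] show ?thesis by (simp add: o_def)
qed

lemma cont_rmult: "a \<in> carrier G \<Longrightarrow> continuous_map T T (\<lambda>x. x \<otimes> a)"
proof -
  assume a: "a \<in> carrier G"
  have "continuous_map T (prod_topology T T) (\<lambda>x. (x, a))"
    using a by (simp add: continuous_map_paired)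
  from continuous_map_compose[OF this cont_mult] show ?thesis by (simp add: o_def)
qed

lemma open_lmult:
  assumes "openin T U" "a \<in> carrier G"
  shows "openin T ((\<lambda>x. a \<otimes> x) ` U)"
proof -
  have U: "U \<subseteq> carrier G" using assms openin_sub by blast
  have "(\<lambda>x. a \<otimes> x) ` U = {y \<in> topspace T. inv a \<otimes> y \<in> U}"
  proof safe
    fix x assume "x \<in> U" then show "a \<otimes> x \<in> topspace T" "inv a \<otimes> (a \<otimes> x) \<in> U"
      using U assms by (auto simp: m_assoc[symmetric])
  next
    fix y assume "y \<in> topspace T" "inv a \<otimes> y \<in> U"
    then show "y \<in> (\<lambda>x. a \<otimes> x) ` U"
      using assms by (intro image_eqI[of _ _ "inv a \<otimes> y"]) (auto simp: m_assoc[symmetric])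
  qed
  then show ?thesis
    using openin_continuous_map_preimage[OF cont_lmult[of "inv a"] assms(1)] assms by simp
qed

lemma open_rmult:
  assumes "openin T U" "a \<in> carrier G"
  shows "openin T ((\<lambda>x. x \<otimes> a) ` U)"
proof -
  have U: "U \<subseteq> carrier G" using assms openin_sub by blast
  have "(\<lambda>x. x \<otimes> a) ` U = {y \<in> topspace T. y \<otimes> inv a \<in> U}"
  proof safe
    fix x assume "x \<in> U" then show "x \<otimes> a \<in> topspace T" "(x \<otimes> a) \<otimes> inv a \<in> U"
      using U assms by (auto simp: m_assoc)
  next
    fix y assume "y \<in> topspace T" "y \<otimes> inv a \<in> U"
    then show "y \<in> (\<lambda>x. x \<otimes> a) ` U"
      using assms by (intro image_eqI[of _ _ "y \<otimes> inv a"]) (auto simp: m_assoc)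
  qed
  then show ?thesis
    using openin_continuous_map_preimage[OF cont_rmult[of "inv a"] assms(1)] assms by simp
qed

lemma open_inv:
  assumes "openin T U"
  shows "openin T ((\<lambda>x. inv x) ` U)"
proof -
  have U: "U \<subseteq> carrier G" using assms openin_sub by blast
  have "(\<lambda>x. inv x) ` U = {y \<in> topspace T. inv y \<in> U}"
  proof safe
    fix x assume "x \<in> U" then show "inv x \<in> topspace T" "inv (inv x) \<in> U"
      using U by auto
  next
    fix y assume "y \<in> topspace T" "inv y \<in> U"
    then show "y \<in> (\<lambda>x. inv x) ` U"
      by (intro image_eqI[of _ _ "inv y"]) auto
  qed
  then show ?thesis
    using openin_continuous_map_preimage[OF cont_inv assms(1)] by simp
qed

lemma regular: "regular_space T"
  unfolding regular_space_def
proof (intro allI impI)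
  fix C a assume H: "closedin T C \<and> a \<in> topspace T - C"
  then have a: "a \<in> carrier G" "a \<notin> C" by auto
  have U0: "openin T (carrier G - C)" using H
    by (metis closedin_def topspace_eq)
  obtain A B where AB: "openin T A" "openin T B" "a \<in> A" "\<one> \<in> B"
    "\<forall>x\<in>A. \<forall>y\<in>B. x \<otimes> y \<in> carrier G - C"
    using mult_nbhd[OF U0 a(1) one_closed] a by auto
  have clA: "T closure_of A \<subseteq> carrier G - C"
  proof
    fix z assume z: "z \<in> T closure_of A"
    then have zG: "z \<in> carrier G" using closure_of_subset_topspace by fastforce
    define Z where "Z = (\<lambda>x. z \<otimes> x) ` ((\<lambda>x. inv x) ` B)"
    have Zo: "openin T Z"
      unfolding Z_def by (rule open_lmult[OF open_inv[OF AB(2)] zG])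
    have Zz: "z \<in> Z"
    proof -
      have "\<one> \<in> (\<lambda>x. inv x) ` B" using AB(4) by (metis image_eqI inv_one)
      moreover have "z = z \<otimes> \<one>" using zG by simp
      ultimately show ?thesis unfolding Z_def by blast
    qed
    have "\<forall>T'. z \<in> T' \<and> openin T T' \<longrightarrow> (\<exists>y. y \<in> A \<and> y \<in> T')"
      using z unfolding in_closure_of by simp
    then obtain y where y: "y \<in> A" "y \<in> Z" using Zo Zz by meson
    then obtain b where b: "b \<in> B" "y = z \<otimes> inv b" unfolding Z_def by auto
    have bG: "b \<in> carrier G" using b AB(2) openin_sub by blast
    have "z = y \<otimes> b" using b bG zG by (simp add: m_assoc)
    then show "z \<in> carrier G - C" using AB(5) y(1) b(1) by auto
  qed
  show "\<exists>U V. openin T U \<and> openin T V \<and> a \<in> U \<and> C \<subseteq> V \<and> disjnt U V"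
  proof (intro exI conjI)
    show "openin T A" "a \<in> A" by fact+
    show "openin T (topspace T - T closure_of A)" by (rule openin_diff[OF openin_topspace closedin_closure_of])
    show "C \<subseteq> topspace T - T closure_of A" using clA H closedin_subset[of T C] by blast
    show "disjnt A (topspace T - T closure_of A)"
      unfolding disjnt_def using closure_of_subset[OF openin_subset[OF AB(1)]] by blast
  qed
qed

lemma singleton_open_discrete:
  assumes "openin T {\<one>}"
  shows "T = discrete_topology (topspace T)"
proof -
  have "openin T {x}" if "x \<in> carrier G" for x
    using open_lmult[OF assms that] that by simp
  then have "discrete_topology (topspace T) = T"
    by (subst discrete_topology_unique) simp
  then show ?thesis by simp
qed

lemma Hausdorff_if_closed_one:
  assumes "\<And>x. x \<in> carrier G \<Longrightarrow> closedin T {x}"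
  shows "Hausdorff_space T"
proof (rule regular_t1_imp_Hausdorff_space[OF regular])
  show "t1_space T" unfolding t1_space_closedin_singleton using assms by simp
qed

end




context tgrp
begin

lemma inv_image_eq: "C \<subseteq> carrier G \<Longrightarrow> (\<lambda>x. inv x) ` C = {y \<in> topspace T. inv y \<in> C}"
proof safe
  fix x assume "C \<subseteq> carrier G" "x \<in> C" then show "inv x \<in> topspace T" "inv (inv x) \<in> C" by auto
next
  fix y assume "inv y \<in> C" "y \<in> topspace T"
  then show "y \<in> (\<lambda>x. inv x) ` C" by (intro image_eqI[of _ _ "inv y"]) auto
qed

lemma closed_inv: "closedin T C \<Longrightarrow> closedin T ((\<lambda>x. inv x) ` C)"
  using closedin_continuous_map_preimage[OF cont_inv, of C] inv_image_eq[of C]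
  by (metis closedin_subset topspace_eq)

lemma cont_sq: "continuous_map T T (\<lambda>x. x \<otimes> x)"
proof -
  have "continuous_map T (prod_topology T T) (\<lambda>x. (x, x))"
    by (simp add: continuous_map_paired)
  from continuous_map_compose[OF this cont_mult] show ?thesis by (simp add: o_def)
qed

lemma clopen_base:
  assumes bd: "basically_disconnected T" and cr: "completely_regular_space T"
    and Oo: "openin T Op" and x: "x \<in> Op"
  shows "\<exists>C. openin T C \<and> closedin T C \<and> x \<in> C \<and> C \<subseteq> Op"
proof -
  have "closedin T (topspace T - Op) \<and> x \<in> topspace T - (topspace T - Op)"
    using Oo x openin_subset by blast
  then have "\<exists>f. continuous_map T (top_of_set {0..1::real}) f \<and> f x = 0 \<and>
    f ` (topspace T - Op) \<subseteq> {1}"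
    by (rule cr[unfolded completely_regular_space_def, THEN spec, THEN spec, THEN mp])
  then obtain f where f: "continuous_map T (top_of_set {0..1::real}) f" "f x = 0"
    "f ` (topspace T - Op) \<subseteq> {1}" by blast
  have fc: "continuous_map T euclideanreal f"
    using f(1) continuous_map_in_subtopology by blast
  define g where "g y = max 0 (1/2 - f y)" for y
  have gc: "continuous_map T euclideanreal g"
    unfolding g_def by (intro continuous_intros fc)
  define P where "P = {y \<in> topspace T. g y \<noteq> 0}"
  have "cozero_set_in T P" unfolding cozero_set_in_def P_def using gc by blast
  then have Co: "openin T (T closure_of P)" using bd unfolding basically_disconnected_def by blast
  have xP: "x \<in> P" using f(2) x Oo openin_subset unfolding P_def g_def by fastforce
  have cl: "closedin T {y \<in> topspace T. f y \<in> {..1/2}}"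
    by (rule closedin_continuous_map_preimage[OF fc]) (simp add: closed_closedin[symmetric])
  have "P \<subseteq> {y \<in> topspace T. f y \<in> {..1/2}}" unfolding P_def g_def by auto
  then have "T closure_of P \<subseteq> {y \<in> topspace T. f y \<in> {..1/2}}"
    using closure_of_minimal cl by blast
  also have "\<dots> \<subseteq> Op"
  proof
    fix y assume y: "y \<in> {y \<in> topspace T. f y \<in> {..1/2}}"
    show "y \<in> Op"
    proof (rule ccontr)
      assume "y \<notin> Op" then have "f y = 1" using f(3) y by blast
      then show False using y by simp
    qed
  qed
  finally show ?thesis
    using Co xP closure_of_subset[of P T] P_def by (intro exI[of _ "T closure_of P"]) auto
qed

lemma W_Lindelof:
  assumes Lin: "Lindelof_space T" and cp: "gdelta_in T {\<one>}"
  shows "Lindelof_space (subtopology T {x \<in> carrier G. x \<otimes> x \<noteq> \<one>})"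
proof -
  obtain \<O> where O: "countable \<O>" "\<And>U. U \<in> \<O> \<Longrightarrow> openin T U" "\<Inter>\<O> = {\<one>}"
    using cp unfolding gdelta_in_alt intersection_of_def by blast
  define F where "F U = {x \<in> carrier G. x \<otimes> x \<notin> U}" for U
  have eq: "{x \<in> carrier G. x \<otimes> x \<noteq> \<one>} = \<Union>(F ` \<O>)"
  proof safe
    fix x assume x: "x \<in> carrier G" "x \<otimes> x \<noteq> \<one>"
    then have "x \<otimes> x \<notin> \<Inter>\<O>" using O(3) by simp
    then obtain U where "U \<in> \<O>" "x \<otimes> x \<notin> U" by blast
    then show "x \<in> \<Union>(F ` \<O>)" using x unfolding F_def by blast
  next
    fix x U assume "U \<in> \<O>" "x \<in> F U" "x \<otimes> x = \<one>"
    then show False using O(3) unfolding F_def by blast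
  next
    fix x U assume "U \<in> \<O>" "x \<in> F U"
    then show "x \<in> carrier G" unfolding F_def by blast
  qed
  have "Lindelof_space (subtopology T (F U))" if "U \<in> \<O>" for U
  proof (rule Lindelof_space_closedin_subtopology[OF Lin])
    have "openin T {x \<in> topspace T. x \<otimes> x \<in> U}"
      using openin_continuous_map_preimage[OF cont_sq O(2)[OF that]] .
    then have "closedin T (topspace T - {x \<in> topspace T. x \<otimes> x \<in> U})" by blast
    moreover have "topspace T - {x \<in> topspace T. x \<otimes> x \<in> U} = F U" unfolding F_def by auto
    ultimately show "closedin T (F U)" by simp
  qed
  then have "Lindelof_space (subtopology T (\<Union>(F ` \<O>)))"
    using O(1) by (intro Lindelof_space_Union) auto
  then show ?thesis using eq by simp
qed

lemma sep_clopen: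
  assumes bd: "basically_disconnected T" and cr: "completely_regular_space T"
    and Hd: "Hausdorff_space T" and x: "x \<in> carrier G" "x \<otimes> x \<noteq> \<one>"
  shows "\<exists>C. openin T C \<and> closedin T C \<and> x \<in> C \<and> (\<forall>y\<in>C. inv y \<notin> C)"
proof -
  have "x \<noteq> inv x"
  proof
    assume "x = inv x" then have "x \<otimes> x = inv x \<otimes> x" by simp
    then show False using x by simp
  qed
  then obtain P Q where PQ: "openin T P" "openin T Q" "x \<in> P" "inv x \<in> Q" "disjnt P Q"
    using Hd x unfolding Hausdorff_space_def by (metis inv_closed topspace_eq)
  define Op where "Op = P \<inter> (\<lambda>y. inv y) ` Q"
  have Oo: "openin T Op" unfolding Op_def using PQ open_inv by blast
  have xO: "x \<in> Op" unfolding Op_def using PQ x by (auto intro: image_eqI[of _ _ "inv x"])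
  obtain C where C: "openin T C" "closedin T C" "x \<in> C" "C \<subseteq> Op"
    using clopen_base[OF bd cr Oo xO] by blast
  have "inv y \<notin> C" if "y \<in> C" for y
  proof
    assume iy: "inv y \<in> C"
    have yG: "y \<in> carrier G" using that C(1) openin_sub by blast
    have "y \<in> P" using that C(4) unfolding Op_def by blast
    moreover have "inv y \<in> (\<lambda>y. inv y) ` Q" using iy C(4) unfolding Op_def by blast
    then obtain q where "q \<in> Q" "inv y = inv q" by blast
    then have "y \<in> Q" using yG PQ(2) openin_sub by (metis inv_inv subsetD)
    ultimately show False using PQ(5) by (simp add: disjnt_iff)
  qed
  then show ?thesis using C by blast
qed

lemma local_boolean:
  assumes Lin: "Lindelof_space T" and bd: "basically_disconnected T"
    and Hd: "Hausdorff_space T" and cp: "gdelta_in T {\<one>}"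
  shows "\<exists>Op. openin T Op \<and> \<one> \<in> Op \<and> (\<forall>x\<in>Op. x \<otimes> x = \<one>)"
proof -
  have cr: "completely_regular_space T"
    using normal_imp_completely_regular_space[OF regular_Lindelof_imp_normal_space[OF regular Lin]] Hd
    by blast
  define W where "W = {x \<in> carrier G. x \<otimes> x \<noteq> \<one>}"
  define \<U> where "\<U> = {C. openin T C \<and> closedin T C \<and> (\<forall>y\<in>C. inv y \<notin> C)}"
  have WL: "Lindelof_space (subtopology T W)" unfolding W_def using W_Lindelof[OF Lin cp] .
  have WU: "W \<subseteq> \<Union>\<U>"
  proof
    fix x assume "x \<in> W"
    then obtain C where "openin T C \<and> closedin T C \<and> x \<in> C \<and> (\<forall>y\<in>C. inv y \<notin> C)"
      using sep_clopen[OF bd cr Hd] unfolding W_def by blast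
    then show "x \<in> \<Union>\<U>" unfolding \<U>_def by blast
  qed
  have "\<forall>U\<in>\<U>. openin T U" unfolding \<U>_def by blast
  moreover have WT: "W \<subseteq> topspace T" unfolding W_def by auto
  ultimately have "\<exists>\<V>. countable \<V> \<and> \<V> \<subseteq> \<U> \<and> W \<subseteq> \<Union>\<V>"
    using WL WU Lindelof_space_subtopology_subset[OF WT] by blast
  then obtain \<V> where V: "countable \<V>" "\<V> \<subseteq> \<U>" "W \<subseteq> \<Union>\<V>" by blast
  define \<V>' where "\<V>' = insert {} \<V>"
  have V': "countable \<V>'" "\<V>' \<noteq> {}" unfolding \<V>'_def using V(1) by auto
  define c where "c = from_nat_into \<V>'"
  have rc: "range c = \<V>'" unfolding c_def using range_from_nat_into[OF V'(2) V'(1)] .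
  have cU: "c n \<in> \<U>" for n
  proof -
    have "c n \<in> \<V>'" using rc by blast
    then have "c n = {} \<or> c n \<in> \<V>" by (simp add: \<V>'_def)
    moreover have "{} \<in> \<U>" unfolding \<U>_def by simp
    ultimately show ?thesis using V(2) by (metis subsetD)
  qed
  have co: "openin T (c n)" and cc: "closedin T (c n)" and cd: "\<And>y. y \<in> c n \<Longrightarrow> inv y \<notin> c n" for n
    using cU[of n] unfolding \<U>_def by auto
  have cG: "c n \<subseteq> carrier G" for n using co openin_sub by blast
  have Wc: "W \<subseteq> \<Union>(range c)" using V(3) rc unfolding \<V>'_def by auto
  define iv where "iv S = (\<lambda>y. inv y) ` S" for S
  define D where "D n = c n \<union> iv (c n)" for n
  have Do: "openin T (D n)" for n unfolding D_def iv_def using co open_inv by blast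
  have Dc: "closedin T (D n)" for n unfolding D_def iv_def using cc closed_inv by blast
  have Dsym: "inv y \<in> D n" if "y \<in> D n" for y n
  proof -
    have "y \<in> c n \<or> y \<in> iv (c n)" using that unfolding D_def by blast
    then show ?thesis
    proof
      assume "y \<in> c n" then show ?thesis unfolding D_def iv_def by blast
    next
      assume "y \<in> iv (c n)" then obtain z where "z \<in> c n" "y = inv z" unfolding iv_def by blast
      then have zG: "z \<in> carrier G" using cG by blast
      then have "inv y = z" using \<open>y = inv z\<close> by simp
      then show ?thesis using \<open>z \<in> c n\<close> unfolding D_def by simp
    qed
  qed
  define U where "U n = c n - \<Union>(D ` {..<n})" for n
  have Uo: "openin T (U n)" for n
  proof -
    have "closedin T (\<Union>(D ` {..<n}))" using Dc by (intro closedin_Union) auto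
    then show ?thesis unfolding U_def using co by (rule openin_diff[rotated])
  qed
  have Uc: "closedin T (U n)" for n
  proof -
    have "openin T (\<Union>(D ` {..<n}))" using Do by (intro openin_Union) auto
    then show ?thesis unfolding U_def using cc by (rule closedin_diff[rotated])
  qed
  have UG: "U n \<subseteq> carrier G" for n unfolding U_def using cG by blast
  define UU where "UU = \<Union>(range U)"
  have UUG: "UU \<subseteq> carrier G" unfolding UU_def using UG by blast
  have disj: "inv x \<notin> UU" if x: "x \<in> UU" for x
  proof
    assume "inv x \<in> UU"
    then obtain m where m: "inv x \<in> U m" unfolding UU_def by blast
    obtain n where n: "x \<in> U n" using x unfolding UU_def by blast
    have xG: "x \<in> carrier G" using n UG by blast
    consider "m < n" | "m = n" | "n < m" by linarith
    then show False
    proof cases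
      case 1
      have "inv x \<in> c m" using m unfolding U_def by blast
      then have "x \<in> D m" using xG unfolding D_def iv_def by (auto intro: image_eqI[of _ _ "inv x"])
      then show False using n 1 unfolding U_def by blast
    next
      case 2
      then show False using m n cd unfolding U_def by blast
    next
      case 3
      have "x \<in> c n" using n unfolding U_def by blast
      then have "inv x \<in> D n" unfolding D_def iv_def by blast
      then show False using m 3 unfolding U_def by blast
    qed
  qed
  have cover: "\<forall>x\<in>D n. x \<in> UU \<or> inv x \<in> UU" for n
  proof (induction n rule: less_induct)
    case (less n)
    show ?case
    proof
      fix x assume x: "x \<in> D n"
      show "x \<in> UU \<or> inv x \<in> UU"
      proof (cases "\<exists>k<n. x \<in> D k")
        case True
        then show ?thesis using less by blast
      next
        case False
        have "x \<in> c n \<or> x \<in> iv (c n)" using x unfolding D_def by blast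
        then show ?thesis
        proof
          assume "x \<in> c n"
          then have "x \<in> U n" using False unfolding U_def by blast
          then show ?thesis unfolding UU_def by blast
        next
          assume "x \<in> iv (c n)"
          then obtain y where y: "y \<in> c n" "x = inv y" unfolding iv_def by blast
          have "y \<notin> D k" if "k < n" for k
          proof
            assume "y \<in> D k" then have "inv y \<in> D k" by (rule Dsym)
            then show False using False y that by blast
          qed
          then have "y \<in> U n" using y unfolding U_def by blast
          moreover have "y \<in> carrier G" using y(1) cG by blast
          then have "inv x = y" using y(2) by simp
          ultimately show ?thesis unfolding UU_def by blast
        qed
      qed
    qed
  qed
  have WUU: "x \<in> UU \<or> inv x \<in> UU" if xW: "x \<in> W" for x
  proof -
    obtain n where "x \<in> c n" using Wc xW by blast
    then have "x \<in> D n" unfolding D_def by blast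
    then show ?thesis using cover by blast
  qed
  define g where "g x = (if x \<in> UU then (1/2::real) ^ (LEAST n. x \<in> U n) else 0)" for x
  have gcont: "continuous_map T Met_TC.mtopology g"
    unfolding Met_TC.continuous_map_to_metric mball_eq_ball
  proof (intro ballI allI impI)
    fix x and e :: real assume xT: "x \<in> topspace T" and e: "e > 0"
    show "\<exists>V. openin T V \<and> x \<in> V \<and> (\<forall>y\<in>V. g y \<in> ball (g x) e)"
    proof (cases "x \<in> UU")
      case True
      then obtain n0 where "x \<in> U n0" unfolding UU_def by blast
      define n where "n = (LEAST n. x \<in> U n)"
      have xn: "x \<in> U n" unfolding n_def by (rule LeastI) fact
      have xk: "x \<notin> U k" if "k < n" for k using not_less_Least[of k "\<lambda>n. x \<in> U n"] that
        unfolding n_def by blast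
      define V where "V = U n - \<Union>(U ` {..<n})"
      have "openin T V"
      proof -
        have "closedin T (\<Union>(U ` {..<n}))" using Uc by (intro closedin_Union) auto
        then show ?thesis unfolding V_def using Uo by (rule openin_diff[rotated])
      qed
      moreover have "x \<in> V" unfolding V_def using xn xk by blast
      moreover have "g y = g x" if "y \<in> V" for y
      proof -
        have yn: "y \<in> U n" and yk: "\<And>k. k < n \<Longrightarrow> y \<notin> U k" using that unfolding V_def by auto
        have "(LEAST n. y \<in> U n) = n"
          by (rule Least_equality) (use yn yk in \<open>auto simp: not_less[symmetric]\<close>)
        moreover have "y \<in> UU" using yn unfolding UU_def by blast
        ultimately show ?thesis using True unfolding g_def n_def by simp
      qed
      moreover have "\<forall>y\<in>V. g y \<in> ball (g x) e"
      using calculation(3) e by simp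
      ultimately show ?thesis by blast
    next
      case False
      then have gx: "g x = 0" unfolding g_def by simp
      obtain N where N: "(1/2::real) ^ N < e" using real_arch_pow_inv[OF e, of "1/2"] by auto
      define V where "V = topspace T - \<Union>(U ` {..<N})"
      have "openin T V"
      proof -
        have "closedin T (\<Union>(U ` {..<N}))" using Uc by (intro closedin_Union) auto
        then show ?thesis unfolding V_def by (rule openin_diff[OF openin_topspace])
      qed
      moreover have "x \<in> V" unfolding V_def using xT False unfolding UU_def by blast
      moreover have "g y \<in> ball (g x) e" if "y \<in> V" for y
      proof (cases "y \<in> UU")
        case True
        then obtain m where m: "y \<in> U m" unfolding UU_def by blast
        have "N \<le> (LEAST n. y \<in> U n)"
        proof (rule ccontr)
          assume "\<not> N \<le> (LEAST n. y \<in> U n)"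
          moreover have "y \<in> U (LEAST n. y \<in> U n)" by (rule LeastI) (fact m)
          ultimately show False using that unfolding V_def by auto
        qed
        then have "(1/2::real) ^ (LEAST n. y \<in> U n) \<le> (1/2) ^ N"
          by (intro power_decreasing) auto
        moreover have "g y = (1/2::real) ^ (LEAST n. y \<in> U n)" using True unfolding g_def by simp
        ultimately have "g y < e" "0 \<le> g y" using N by (linarith, simp)
        then show ?thesis using gx by (simp add: dist_real_def)
      next
        case False
        then show ?thesis using gx e unfolding g_def by simp
      qed
      ultimately show ?thesis by blast
    qed
  qed
  then have gc: "continuous_map T euclideanreal g" by simp
  have "UU = {x \<in> topspace T. g x \<noteq> 0}" unfolding g_def using UUG by auto
  then have "cozero_set_in T UU" unfolding cozero_set_in_def using gc by blast
  then have clUo: "openin T (T closure_of UU)" using bd unfolding basically_disconnected_def by blast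
  define IU where "IU = iv UU"
  have IUo: "openin T IU"
  proof -
    have "openin T UU" unfolding UU_def using Uo by (intro openin_Union) auto
    then show ?thesis unfolding IU_def iv_def by (rule open_inv)
  qed
  have d1: "y \<notin> IU" if "y \<in> T closure_of UU" for y
  proof
    assume yI: "y \<in> IU"
    have "\<forall>T'. y \<in> T' \<and> openin T T' \<longrightarrow> (\<exists>z. z \<in> UU \<and> z \<in> T')"
      using that unfolding in_closure_of by simp
    then obtain z where z: "z \<in> UU" "z \<in> IU" using yI IUo by meson
    then obtain w where w: "w \<in> UU" "z = inv w" unfolding IU_def iv_def by blast
    have "w \<in> carrier G" using w(1) UUG by blast
    then have "inv z = w" using w(2) by simp
    then show False using disj[OF z(1)] w(1) by simp
  qed
  have d2: "y \<notin> T closure_of UU" if "y \<in> T closure_of IU" for y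
  proof
    assume yU: "y \<in> T closure_of UU"
    have "\<forall>T'. y \<in> T' \<and> openin T T' \<longrightarrow> (\<exists>z. z \<in> IU \<and> z \<in> T')"
      using that unfolding in_closure_of by simp
    then obtain z where z: "z \<in> IU" "z \<in> T closure_of UU" using yU clUo by meson
    then show False using d1 by blast
  qed
  have inv_cl: "\<one> \<in> T closure_of (iv S)" if "\<one> \<in> T closure_of S" "S \<subseteq> carrier G" for S
    unfolding in_closure_of
  proof (intro conjI allI impI)
    show "\<one> \<in> topspace T" by simp
    fix T' assume T': "\<one> \<in> T' \<and> openin T T'"
    have "openin T (iv T')" unfolding iv_def using T' open_inv by blast
    moreover have "\<one> \<in> iv T'" unfolding iv_def using T' by (metis image_eqI inv_one)
    moreover have "\<forall>T'. \<one> \<in> T' \<and> openin T T' \<longrightarrow> (\<exists>z. z \<in> S \<and> z \<in> T')"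
      using that unfolding in_closure_of by simp
    ultimately obtain z where z: "z \<in> S" "z \<in> iv T'" by meson
    then obtain t where t: "t \<in> T'" "z = inv t" unfolding iv_def by blast
    have "t \<in> carrier G" using t(1) T' openin_sub by blast
    then have "inv z = t" using t(2) by simp
    then have "inv z \<in> iv S \<and> inv z \<in> T'" using z(1) t(1) unfolding iv_def by blast
    then show "\<exists>y. y \<in> iv S \<and> y \<in> T'" by blast
  qed
  have ivIU: "iv IU = UU"
  proof -
    have "iv IU = (\<lambda>y. inv (inv y)) ` UU" unfolding IU_def iv_def image_image by simp
    also have "\<dots> = (\<lambda>y. y) ` UU"
    proof (rule image_cong[OF refl])
      fix y assume "y \<in> UU" then have "y \<in> carrier G" using UUG by blast
      then show "inv (inv y) = y" by simp
    qed
    also have "\<dots> = UU" by simp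
    finally show ?thesis .
  qed
  have IUG: "IU \<subseteq> carrier G" unfolding IU_def iv_def using UUG by auto
  have "\<one> \<notin> T closure_of W"
  proof
    assume "\<one> \<in> T closure_of W"
    moreover have "W \<subseteq> UU \<union> IU"
    proof
      fix x assume x: "x \<in> W"
      then have xG: "x \<in> carrier G" unfolding W_def by blast
      show "x \<in> UU \<union> IU"
        using WUU[OF x] xG unfolding IU_def iv_def by (auto intro: image_eqI[of _ _ "inv x"])
    qed
    then have "T closure_of W \<subseteq> T closure_of (UU \<union> IU)" by (rule closure_of_mono)
    ultimately have "\<one> \<in> T closure_of (UU \<union> IU)" by (rule subsetD[rotated])
    then have "\<one> \<in> T closure_of UU \<union> T closure_of IU" by (simp add: closure_of_Un)
    then show False
    proof
      assume h: "\<one> \<in> T closure_of UU"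
      then have "\<one> \<in> T closure_of IU" using inv_cl[OF h UUG] unfolding IU_def by simp
      then show False using d2 h by blast
    next
      assume h: "\<one> \<in> T closure_of IU"
      then have "\<one> \<in> T closure_of UU" using inv_cl[OF h IUG] ivIU by simp
      then show False using d2 h by blast
    qed
  qed
  show ?thesis
  proof (intro exI conjI)
    show "openin T (topspace T - T closure_of W)"
      by (rule openin_diff[OF openin_topspace closedin_closure_of])
    show "\<one> \<in> topspace T - T closure_of W" using \<open>\<one> \<notin> T closure_of W\<close> by simp
    show "\<forall>x\<in>topspace T - T closure_of W. x \<otimes> x = \<one>"
    proof
      fix x assume x: "x \<in> topspace T - T closure_of W"
      have "x \<notin> W" using x closure_of_subset[of W T] unfolding W_def by auto
      then show "x \<otimes> x = \<one>" using x unfolding W_def by auto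
    qed
  qed
qed

end



context tgrp
begin

lemma boolean_subgroup:
  assumes Oo: "openin T Op" and O1: "\<one> \<in> Op" and Ob: "\<forall>x\<in>Op. x \<otimes> x = \<one>"
  shows "\<exists>K. subgroup K G \<and> openin T K \<and> closedin T K \<and> (\<forall>x\<in>K. x \<otimes> x = \<one>)"
proof -
  obtain A B where AB: "openin T A" "openin T B" "\<one> \<in> A" "\<one> \<in> B"
    "\<forall>a\<in>A. \<forall>b\<in>B. a \<otimes> b \<in> Op"
    using mult_nbhd[OF Oo one_closed one_closed] O1 by auto
  define V0 where "V0 = A \<inter> B"
  define V where "V = V0 \<inter> (\<lambda>x. inv x) ` V0"
  have V0o: "openin T V0" unfolding V0_def using AB by blast
  have Vo: "openin T V" unfolding V_def using V0o open_inv by blast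
  have VG: "V \<subseteq> carrier G" using Vo openin_sub by blast
  have V1: "\<one> \<in> V" unfolding V_def V0_def using AB(3,4) by (metis IntI image_eqI inv_one)
  have VV: "a \<otimes> b \<in> Op" if "a \<in> V" "b \<in> V" for a b
    using AB(5) that unfolding V_def V0_def by blast
  have VO: "a \<in> Op" if "a \<in> V" for a
  proof -
    have "a \<otimes> \<one> \<in> Op" using VV[OF that V1] .
    then show ?thesis using that VG by auto
  qed
  have Vsq: "a \<otimes> a = \<one>" if "a \<in> V" for a using Ob VO[OF that] by blast
  have Vinv: "inv a = a" if "a \<in> V" for a
    using inv_equality[OF Vsq[OF that]] that VG by blast
  have Vcomm: "a \<otimes> b = b \<otimes> a" if "a \<in> V" "b \<in> V" for a b
  proof -
    have aG: "a \<in> carrier G" and bG: "b \<in> carrier G" using that VG by auto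
    have "(a \<otimes> b) \<otimes> (a \<otimes> b) = \<one>" using Ob VV[OF that] by blast
    then have "inv (a \<otimes> b) = a \<otimes> b" using inv_equality aG bG by blast
    moreover have "inv (a \<otimes> b) = inv b \<otimes> inv a" using aG bG by (simp add: inv_mult_group)
    ultimately show ?thesis using Vinv that by simp
  qed
  define K where "K = generate G V"
  have Ksub: "subgroup K G" unfolding K_def using generate_is_subgroup[OF VG] .
  have KG: "K \<subseteq> carrier G" using Ksub subgroup.subset by blast
  have l1: "\<forall>v\<in>V. x \<otimes> v = v \<otimes> x" if "x \<in> K" for x
    using that unfolding K_def
  proof (induction x rule: generate.induct)
    case one then show ?case using VG by auto
  next
    case (incl h) then show ?case using Vcomm by blast
  next
    case (inv h) then show ?case using Vcomm Vinv by simp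
  next
    case (eng h1 h2)
    have G1: "h1 \<in> carrier G" "h2 \<in> carrier G" using eng.hyps KG unfolding K_def by auto
    show ?case
    proof
      fix v assume v: "v \<in> V"
      then have vG: "v \<in> carrier G" using VG by blast
      have "h1 \<otimes> h2 \<otimes> v = h1 \<otimes> (v \<otimes> h2)" using eng.IH(2) v G1 vG by (simp add: m_assoc)
      also have "\<dots> = (h1 \<otimes> v) \<otimes> h2" using G1 vG by (simp add: m_assoc)
      also have "\<dots> = v \<otimes> h1 \<otimes> h2" using eng.IH(1) v by simp
      also have "\<dots> = v \<otimes> (h1 \<otimes> h2)" using G1 vG by (simp add: m_assoc)
      finally show "h1 \<otimes> h2 \<otimes> v = v \<otimes> (h1 \<otimes> h2)" .
    qed
  qed
  have l2: "\<forall>y\<in>K. x \<otimes> y = y \<otimes> x" if "x \<in> K" for x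
    using that unfolding K_def
  proof (induction x rule: generate.induct)
    case one then show ?case using KG unfolding K_def by auto
  next
    case (incl h) then show ?case using l1 unfolding K_def by metis
  next
    case (inv h) then show ?case using l1 Vinv unfolding K_def by metis
  next
    case (eng h1 h2)
    have G1: "h1 \<in> carrier G" "h2 \<in> carrier G" using eng.hyps KG unfolding K_def by auto
    show ?case
    proof
      fix v assume v: "v \<in> generate G V"
      then have vG: "v \<in> carrier G" using KG unfolding K_def by blast
      have "h1 \<otimes> h2 \<otimes> v = h1 \<otimes> (v \<otimes> h2)" using eng.IH(2) v G1 vG by (simp add: m_assoc)
      also have "\<dots> = (h1 \<otimes> v) \<otimes> h2" using G1 vG by (simp add: m_assoc)
      also have "\<dots> = v \<otimes> h1 \<otimes> h2" using eng.IH(1) v by simp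
      also have "\<dots> = v \<otimes> (h1 \<otimes> h2)" using G1 vG by (simp add: m_assoc)
      finally show "h1 \<otimes> h2 \<otimes> v = v \<otimes> (h1 \<otimes> h2)" .
    qed
  qed
  have l3: "x \<otimes> x = \<one>" if "x \<in> K" for x
    using that unfolding K_def
  proof (induction x rule: generate.induct)
    case one then show ?case by simp
  next
    case (incl h) then show ?case using Vsq by blast
  next
    case (inv h) then show ?case using Vsq Vinv by simp
  next
    case (eng h1 h2)
    have G1: "h1 \<in> carrier G" "h2 \<in> carrier G" using eng.hyps KG unfolding K_def by auto
    have c: "h2 \<otimes> h1 = h1 \<otimes> h2" using l2 eng.hyps unfolding K_def by metis
    have "h1 \<otimes> h2 \<otimes> (h1 \<otimes> h2) = h1 \<otimes> (h2 \<otimes> h1) \<otimes> h2" using G1 by (simp add: m_assoc)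
    also have "\<dots> = (h1 \<otimes> h1) \<otimes> (h2 \<otimes> h2)" using G1 c by (simp add: m_assoc)
    also have "\<dots> = \<one>" using eng.IH by simp
    finally show ?case .
  qed
  have nb: "(\<lambda>v. x \<otimes> v) ` V \<subseteq> K" if "x \<in> K" for x
  proof
    fix y assume "y \<in> (\<lambda>v. x \<otimes> v) ` V"
    then obtain v where "v \<in> V" "y = x \<otimes> v" by blast
    then show "y \<in> K" using that unfolding K_def by (metis generate.eng generate.incl)
  qed
  have xin: "x \<in> (\<lambda>v. x \<otimes> v) ` V" if "x \<in> carrier G" for x
  proof -
    have "x = x \<otimes> \<one>" using that by simp
    then show ?thesis using V1 by blast
  qed
  have Ko: "openin T K"
  proof (subst openin_subopen, intro ballI)
    fix x assume x: "x \<in> K"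
    then have xG: "x \<in> carrier G" using KG by blast
    show "\<exists>T'. openin T T' \<and> x \<in> T' \<and> T' \<subseteq> K"
      using open_lmult[OF Vo xG] xin[OF xG] nb[OF x] by blast
  qed
  have Kc: "closedin T K"
  proof -
    have "openin T (topspace T - K)"
    proof (subst openin_subopen, intro ballI)
      fix x assume x: "x \<in> topspace T - K"
      then have xG: "x \<in> carrier G" by simp
      have "(\<lambda>v. x \<otimes> v) ` V \<subseteq> topspace T - K"
      proof
        fix y assume "y \<in> (\<lambda>v. x \<otimes> v) ` V"
        then obtain v where v: "v \<in> V" "y = x \<otimes> v" by blast
        have vG: "v \<in> carrier G" using v VG by blast
        show "y \<in> topspace T - K"
        proof
          show "y \<in> topspace T" using v xG vG by simp
          show "y \<notin> K"
          proof
            assume "y \<in> K"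
            then have "y \<otimes> v \<in> K" using v(1) unfolding K_def by (metis generate.eng generate.incl)
            moreover have "y \<otimes> v = x" using v xG vG Vsq[OF v(1)] by (simp add: m_assoc)
            ultimately show False using x by simp
          qed
        qed
      qed
      then show "\<exists>T'. openin T T' \<and> x \<in> T' \<and> T' \<subseteq> topspace T - K"
        using open_lmult[OF Vo xG] xin[OF xG] by blast
    qed
    then show ?thesis unfolding closedin_def using KG by simp
  qed
  show ?thesis using Ksub Ko Kc l3 by blast
qed

end

lemma B_final:
  fixes H :: "'a monoid" (structure)
  assumes tgH: "topological_group H T" and nd: "T \<noteq> discrete_topology (topspace T)"
    and Lin: "Lindelof_space T" and bd: "basically_disconnected T" and Hd: "Hausdorff_space T"
    and cp: "countable_pseudocharacter H T"
  shows "\<exists>(G :: 'a monoid) T. topological_group G T \<and> T \<noteq> discrete_topology (topspace T) \<and>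
       Lindelof_space T \<and> boolean_group G \<and> basically_disconnected T \<and>
       Hausdorff_space T \<and> countable_pseudocharacter G T"
proof -
  interpret tgrp H T
    using tgH by (simp add: tgrp_def tgrp_axioms_def topological_group_def)
  have cp': "gdelta_in T {\<one>}" using cp unfolding countable_pseudocharacter_def .
  obtain Op where "openin T Op" "\<one> \<in> Op" "\<forall>x\<in>Op. x \<otimes> x = \<one>"
    using local_boolean[OF Lin bd Hd cp'] by blast
  then obtain K where K: "subgroup K H" "openin T K" "closedin T K" "\<forall>x\<in>K. x \<otimes> x = \<one>"
    using boolean_subgroup by blast
  have KG: "K \<subseteq> carrier H" using K(1) subgroup.subset by blast
  define HK where "HK = H\<lparr>carrier := K\<rparr>"
  define TK where "TK = subtopology T K"
  have tsK: "topspace TK = K" unfolding TK_def using KG by auto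
  have grp: "group HK" unfolding HK_def using subgroup_imp_group[OF K(1)] .
  have c1: "continuous_map (prod_topology TK TK) TK (\<lambda>p. fst p \<otimes>\<^bsub>HK\<^esub> snd p)"
  proof -
    have "prod_topology TK TK = subtopology (prod_topology T T) (K \<times> K)"
      unfolding TK_def by (simp add: subtopology_Times)
    moreover have "continuous_map (subtopology (prod_topology T T) (K \<times> K)) T (\<lambda>p. fst p \<otimes> snd p)"
      by (rule continuous_map_from_subtopology[OF cont_mult])
    moreover have "(\<lambda>p. fst p \<otimes> snd p) \<in> topspace (subtopology (prod_topology T T) (K \<times> K)) \<rightarrow> K"
      using K(1) by (auto simp: subgroup.m_closed)
    ultimately show ?thesis unfolding TK_def HK_def
      by (simp add: continuous_map_in_subtopology)
  qed
  have c2: "continuous_map TK TK (\<lambda>x. inv\<^bsub>HK\<^esub> x)"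
  proof -
    have "continuous_map TK TK (\<lambda>x. inv x)"
      unfolding TK_def continuous_map_in_subtopology
      using continuous_map_from_subtopology[OF cont_inv] K(1) by (auto simp: subgroup.m_inv_closed)
    then show ?thesis
      by (rule continuous_map_eq) (simp add: tsK HK_def K(1))
  qed
  have tgK: "topological_group HK TK"
    unfolding topological_group_def using grp c1 c2 tsK HK_def by simp
  have ndK: "TK \<noteq> discrete_topology (topspace TK)"
  proof
    assume "TK = discrete_topology (topspace TK)"
    then have "openin TK {\<one>}" using tsK subgroup.one_closed[OF K(1)] by (metis discrete_topology_unique)
    then have "openin T {\<one>}" unfolding TK_def using openin_open_subtopology[OF K(2)] by blast
    then show False using singleton_open_discrete nd by blast
  qed
  have LinK: "Lindelof_space TK" unfolding TK_def using Lindelof_space_closedin_subtopology[OF Lin K(3)] .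
  have boolK: "boolean_group HK" unfolding boolean_group_def HK_def using K(4) by simp
  have HdK: "Hausdorff_space TK" unfolding TK_def using Hausdorff_space_subtopology[OF Hd] .
  have cpK: "countable_pseudocharacter HK TK"
    unfolding countable_pseudocharacter_def HK_def TK_def gdelta_in_subtopology
    using cp' subgroup.one_closed[OF K(1)] by (intro exI[of _ "{\<one>}"]) auto
  have bdK: "basically_disconnected TK"
    unfolding basically_disconnected_def
  proof (intro allI impI)
    fix U assume "cozero_set_in TK U"
    then obtain f where f: "continuous_map TK euclideanreal f" "U = {x \<in> topspace TK. f x \<noteq> 0}"
      unfolding cozero_set_in_def by blast
    define f' where "f' x = (if x \<in> K then f x else 0)" for x
    have fc: "continuous_map T euclideanreal f'"
      unfolding continuous_map_def
    proof (intro conjI allI impI)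
      show "f' \<in> topspace T \<rightarrow> topspace euclideanreal" by simp
      fix A assume A: "openin euclideanreal A"
      have P: "openin T {x \<in> K. f x \<in> A}"
      proof -
        have "openin TK {x \<in> topspace TK. f x \<in> A}"
          using openin_continuous_map_preimage[OF f(1) A] .
        moreover have "{x \<in> topspace TK. f x \<in> A} = {x \<in> K. f x \<in> A}" using tsK by simp
        ultimately show ?thesis using openin_open_subtopology[OF K(2)] unfolding TK_def by simp
      qed
      have Kc': "openin T (topspace T - K)" using K(3) by blast
      show "openin T {x \<in> topspace T. f' x \<in> A}"
      proof (cases "0 \<in> A")
        case True
        have "{x \<in> topspace T. f' x \<in> A} = (topspace T - K) \<union> {x \<in> K. f x \<in> A}"
          unfolding f'_def using True KG by auto
        then show ?thesis using P Kc' by auto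
      next
        case False
        have "{x \<in> topspace T. f' x \<in> A} = {x \<in> K. f x \<in> A}"
          unfolding f'_def using False KG by auto
        then show ?thesis using P by simp
      qed
    qed
    have UK: "U \<subseteq> K" using f(2) tsK by simp
    have "U = {x \<in> topspace T. f' x \<noteq> 0}" using f(2) tsK KG unfolding f'_def by auto
    then have "cozero_set_in T U" unfolding cozero_set_in_def using fc by blast
    then have o: "openin T (T closure_of U)" using bd unfolding basically_disconnected_def by blast
    have "T closure_of U \<subseteq> K" using closure_of_minimal[OF UK K(3)] .
    moreover have "TK closure_of U = K \<inter> T closure_of U"
      unfolding TK_def using closure_of_subtopology_open UK by blast
    ultimately have "TK closure_of U = T closure_of U" by blast
    then show "openin TK (TK closure_of U)"
      using o \<open>T closure_of U \<subseteq> K\<close> openin_open_subtopology[OF K(2)] unfolding TK_def by simp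
  qed
  show ?thesis using tgK ndK LinK boolK bdK HdK cpK by blast
qed




context group
begin
lemma canc1 [simp]: "x \<in> carrier G \<Longrightarrow> y \<in> carrier G \<Longrightarrow> x \<otimes> inv y \<otimes> y = x"
  by (simp add: m_assoc)
lemma canc2 [simp]: "x \<in> carrier G \<Longrightarrow> y \<in> carrier G \<Longrightarrow> x \<otimes> y \<otimes> inv y = x"
  by (simp add: m_assoc)
lemma canc3 [simp]: "x \<in> carrier G \<Longrightarrow> y \<in> carrier G \<Longrightarrow> inv x \<otimes> (x \<otimes> y) = y"
  by (simp add: m_assoc[symmetric])
lemma canc4 [simp]: "x \<in> carrier G \<Longrightarrow> y \<in> carrier G \<Longrightarrow> x \<otimes> (inv x \<otimes> y) = y"
  by (simp add: m_assoc[symmetric])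
end

locale qsetup = tgrp +
  fixes N :: "'a set"
  assumes NG: "N \<subseteq> carrier G" and N1: "\<one> \<in> N"
    and Nm: "\<And>x y. x \<in> N \<Longrightarrow> y \<in> N \<Longrightarrow> x \<otimes> y \<in> N"
    and Ni: "\<And>x. x \<in> N \<Longrightarrow> inv x \<in> N"
    and Nc: "\<And>g x. g \<in> carrier G \<Longrightarrow> x \<in> N \<Longrightarrow> g \<otimes> x \<otimes> inv g \<in> N"
    and Ncl: "closedin T N"
begin

definition pi :: "'a \<Rightarrow> 'a" where
  "pi x = (SOME y. y \<in> carrier G \<and> y \<otimes> inv x \<in> N)"

lemma pi_props: "x \<in> carrier G \<Longrightarrow> pi x \<in> carrier G \<and> pi x \<otimes> inv x \<in> N"
  unfolding pi_def by (rule someI[of _ x]) (simp add: N1)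

lemma pi_G: "x \<in> carrier G \<Longrightarrow> pi x \<in> carrier G" using pi_props by blast
lemma pi_N: "x \<in> carrier G \<Longrightarrow> pi x \<otimes> inv x \<in> N" using pi_props by blast

lemma pi_eq_iff:
  assumes x: "x \<in> carrier G" and y: "y \<in> carrier G"
  shows "pi x = pi y \<longleftrightarrow> x \<otimes> inv y \<in> N"
proof
  assume "x \<otimes> inv y \<in> N"
  then have xy: "x \<otimes> inv y \<in> N" .
  have yx: "y \<otimes> inv x \<in> N"
  proof -
    have "inv (x \<otimes> inv y) \<in> N" using Ni xy by blast
    moreover have "inv (x \<otimes> inv y) = y \<otimes> inv x" using x y by (simp add: inv_mult_group)
    ultimately show ?thesis by simp
  qed
  have "(\<lambda>z. z \<in> carrier G \<and> z \<otimes> inv x \<in> N) = (\<lambda>z. z \<in> carrier G \<and> z \<otimes> inv y \<in> N)"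
  proof (rule ext, rule iffI)
    fix z assume z: "z \<in> carrier G \<and> z \<otimes> inv x \<in> N"
    have "(z \<otimes> inv x) \<otimes> (x \<otimes> inv y) \<in> N" using Nm z xy by blast
    moreover have "(z \<otimes> inv x) \<otimes> (x \<otimes> inv y) = z \<otimes> inv y" using conjunct1[OF z] x y by (simp add: m_assoc[symmetric])
    ultimately show "z \<in> carrier G \<and> z \<otimes> inv y \<in> N" using z by simp
  next
    fix z assume z: "z \<in> carrier G \<and> z \<otimes> inv y \<in> N"
    have "(z \<otimes> inv y) \<otimes> (y \<otimes> inv x) \<in> N" using Nm z yx by blast
    moreover have "(z \<otimes> inv y) \<otimes> (y \<otimes> inv x) = z \<otimes> inv x" using conjunct1[OF z] x y by (simp add: m_assoc[symmetric])
    ultimately show "z \<in> carrier G \<and> z \<otimes> inv x \<in> N" using z by simp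
  qed
  then show "pi x = pi y" unfolding pi_def by simp
next
  assume e: "pi x = pi y"
  have a: "inv (pi x \<otimes> inv x) \<in> N" using Ni pi_N[OF x] by blast
  have b: "pi y \<otimes> inv y \<in> N" using pi_N[OF y] .
  have "inv (pi x \<otimes> inv x) \<otimes> (pi y \<otimes> inv y) \<in> N" using Nm a b by blast
  moreover have "inv (pi x \<otimes> inv x) \<otimes> (pi y \<otimes> inv y) = x \<otimes> inv y"
    using x y pi_G[OF x] e by (simp add: inv_mult_group m_assoc[symmetric])
  ultimately show "x \<otimes> inv y \<in> N" by simp
qed

lemma pi_pi: "x \<in> carrier G \<Longrightarrow> pi (pi x) = pi x"
  using pi_eq_iff[OF pi_G] pi_N by blast

lemma piL: assumes x: "x \<in> carrier G" and y: "y \<in> carrier G"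
  shows "pi (pi x \<otimes> y) = pi (x \<otimes> y)"
proof -
  have "(pi x \<otimes> y) \<otimes> inv (x \<otimes> y) = pi x \<otimes> inv x"
    using x y pi_G[OF x] by (simp add: inv_mult_group m_assoc)
  then have "(pi x \<otimes> y) \<otimes> inv (x \<otimes> y) \<in> N" using pi_N[OF x] by simp
  then show ?thesis using pi_eq_iff x y pi_G[OF x] by simp
qed

lemma piR: assumes x: "x \<in> carrier G" and y: "y \<in> carrier G"
  shows "pi (x \<otimes> pi y) = pi (x \<otimes> y)"
proof -
  have "(x \<otimes> pi y) \<otimes> inv (x \<otimes> y) = x \<otimes> (pi y \<otimes> inv y) \<otimes> inv x"
    using x y pi_G[OF y] by (simp add: inv_mult_group m_assoc)
  then have "(x \<otimes> pi y) \<otimes> inv (x \<otimes> y) \<in> N" using Nc[OF x pi_N[OF y]] by simp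
  then show ?thesis using pi_eq_iff x y pi_G[OF y] by simp
qed

definition QG :: "'a monoid" where
  "QG = \<lparr>carrier = pi ` carrier G, mult = (\<lambda>a b. pi (a \<otimes> b)), one = pi \<one>\<rparr>"

lemma QG_simps [simp]: "carrier QG = pi ` carrier G" "mult QG = (\<lambda>a b. pi (a \<otimes> b))" "one QG = pi \<one>"
  by (simp_all add: QG_def)

lemma QG_sub: "pi ` carrier G \<subseteq> carrier G" using pi_G by blast

lemma QG_group: "group QG"
proof (rule groupI)
  fix x y assume "x \<in> carrier QG" "y \<in> carrier QG"
  then show "x \<otimes>\<^bsub>QG\<^esub> y \<in> carrier QG" using QG_sub by auto
next
  show "\<one>\<^bsub>QG\<^esub> \<in> carrier QG" by simp
next
  fix x y z assume a: "x \<in> carrier QG" "y \<in> carrier QG" "z \<in> carrier QG"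
  then have G: "x \<in> carrier G" "y \<in> carrier G" "z \<in> carrier G" using QG_sub by auto
  have "pi (pi (x \<otimes> y) \<otimes> z) = pi ((x \<otimes> y) \<otimes> z)" using piL G by simp
  also have "\<dots> = pi (x \<otimes> (y \<otimes> z))" using G by (simp add: m_assoc)
  also have "\<dots> = pi (x \<otimes> pi (y \<otimes> z))" using piR G by simp
  finally show "x \<otimes>\<^bsub>QG\<^esub> y \<otimes>\<^bsub>QG\<^esub> z = x \<otimes>\<^bsub>QG\<^esub> (y \<otimes>\<^bsub>QG\<^esub> z)" by simp
next
  fix x assume "x \<in> carrier QG"
  then obtain z where z: "z \<in> carrier G" "x = pi z" by auto
  have "pi (pi \<one> \<otimes> pi z) = pi (\<one> \<otimes> pi z)" using piL z pi_G by simp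
  also have "\<dots> = pi z" using pi_pi z pi_G by simp
  finally show "\<one>\<^bsub>QG\<^esub> \<otimes>\<^bsub>QG\<^esub> x = x" using z by simp
next
  fix x assume "x \<in> carrier QG"
  then obtain z where z: "z \<in> carrier G" "x = pi z" by auto
  have "pi (pi (inv z) \<otimes> pi z) = pi (inv z \<otimes> pi z)" using piL z pi_G by simp
  also have "\<dots> = pi (inv z \<otimes> z)" using piR z by simp
  also have "\<dots> = pi \<one>" using z by simp
  finally have "pi (inv z) \<otimes>\<^bsub>QG\<^esub> x = \<one>\<^bsub>QG\<^esub>" using z by simp
  moreover have "pi (inv z) \<in> carrier QG" using z by simp
  ultimately show "\<exists>y\<in>carrier QG. y \<otimes>\<^bsub>QG\<^esub> x = \<one>\<^bsub>QG\<^esub>" by blast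
qed

lemma QG_inv: assumes z: "z \<in> carrier G" shows "inv\<^bsub>QG\<^esub> (pi z) = pi (inv z)"
proof (rule group.inv_equality[OF QG_group])
  have "pi (pi (inv z) \<otimes> pi z) = pi (inv z \<otimes> pi z)" using piL z pi_G by simp
  also have "\<dots> = pi (inv z \<otimes> z)" using piR z by simp
  also have "\<dots> = pi \<one>" using z by simp
  finally show "pi (inv z) \<otimes>\<^bsub>QG\<^esub> pi z = \<one>\<^bsub>QG\<^esub>" by simp
  show "pi z \<in> carrier QG" "pi (inv z) \<in> carrier QG" using z by auto
qed

definition QT :: "'a topology" where
  "QT = topology (\<lambda>A. A \<subseteq> pi ` carrier G \<and> openin T {x \<in> carrier G. pi x \<in> A})"

lemma QT_istop: "istopology (\<lambda>A. A \<subseteq> pi ` carrier G \<and> openin T {x \<in> carrier G. pi x \<in> A})"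
proof -
  have i1: "S \<inter> S' \<subseteq> pi ` carrier G \<and> openin T {x \<in> carrier G. pi x \<in> S \<inter> S'}"
    if S: "S \<subseteq> pi ` carrier G \<and> openin T {x \<in> carrier G. pi x \<in> S}"
    and S': "S' \<subseteq> pi ` carrier G \<and> openin T {x \<in> carrier G. pi x \<in> S'}" for S S'
  proof -
    have "{x \<in> carrier G. pi x \<in> S \<inter> S'} = {x \<in> carrier G. pi x \<in> S} \<inter> {x \<in> carrier G. pi x \<in> S'}"
      by blast
    then show ?thesis using S S' by auto
  qed
  have i2: "\<Union>K \<subseteq> pi ` carrier G \<and> openin T {x \<in> carrier G. pi x \<in> \<Union>K}"
    if K: "\<forall>S\<in>K. S \<subseteq> pi ` carrier G \<and> openin T {x \<in> carrier G. pi x \<in> S}" for K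
  proof -
    have "{x \<in> carrier G. pi x \<in> \<Union>K} = \<Union>((\<lambda>S. {x \<in> carrier G. pi x \<in> S}) ` K)"
      by blast
    moreover have "openin T (\<Union>((\<lambda>S. {x \<in> carrier G. pi x \<in> S}) ` K))"
      using K by (intro openin_Union) auto
    ultimately show ?thesis using K by auto
  qed
  show ?thesis unfolding istopology_def using i1 i2 by blast
qed

lemma openin_QT: "openin QT A \<longleftrightarrow> A \<subseteq> pi ` carrier G \<and> openin T {x \<in> carrier G. pi x \<in> A}"
  unfolding QT_def using QT_istop by simp

lemma topspace_QT [simp]: "topspace QT = pi ` carrier G"
proof -
  have "openin QT (pi ` carrier G)" unfolding openin_QT
  proof
    have "{x \<in> carrier G. pi x \<in> pi ` carrier G} = topspace T" by auto
    then show "openin T {x \<in> carrier G. pi x \<in> pi ` carrier G}" using openin_topspace[of T] by simp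
  qed simp
  then have "pi ` carrier G \<subseteq> topspace QT" by (rule openin_subset)
  moreover have "topspace QT \<subseteq> pi ` carrier G"
    using openin_QT[of "topspace QT"] by simp
  ultimately show ?thesis by blast
qed

lemma pi_cont: "continuous_map T QT pi"
  unfolding continuous_map_def
proof (intro conjI allI impI)
  show "pi \<in> topspace T \<rightarrow> topspace QT" by auto
  fix A assume "openin QT A"
  then show "openin T {x \<in> topspace T. pi x \<in> A}" unfolding openin_QT by simp
qed

lemma pi_open: assumes Ob: "openin T Ob" shows "openin QT (pi ` Ob)"
  unfolding openin_QT
proof
  have OG: "Ob \<subseteq> carrier G" using Ob openin_sub by blast
  then show "pi ` Ob \<subseteq> pi ` carrier G" by blast
  have "{x \<in> carrier G. pi x \<in> pi ` Ob} = \<Union>((\<lambda>n. (\<lambda>ob. n \<otimes> ob) ` Ob) ` N)"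
  proof (intro equalityI subsetI)
    fix x assume "x \<in> {x \<in> carrier G. pi x \<in> pi ` Ob}"
    then obtain ob where x: "x \<in> carrier G" and ob: "ob \<in> Ob" "pi x = pi ob" by blast
    have oG: "ob \<in> carrier G" using ob OG by blast
    have "x \<otimes> inv ob \<in> N" using pi_eq_iff[OF x oG] ob by simp
    moreover have "x = (x \<otimes> inv ob) \<otimes> ob" using x oG by simp
    ultimately show "x \<in> \<Union>((\<lambda>n. (\<lambda>ob. n \<otimes> ob) ` Ob) ` N)" using ob by blast
  next
    fix x assume "x \<in> \<Union>((\<lambda>n. (\<lambda>ob. n \<otimes> ob) ` Ob) ` N)"
    then obtain n ob where n: "n \<in> N" and ob: "ob \<in> Ob" and x: "x = n \<otimes> ob" by blast
    have G: "n \<in> carrier G" "ob \<in> carrier G" using n ob NG OG by auto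
    have "(n \<otimes> ob) \<otimes> inv ob \<in> N" using G n by simp
    then have "pi (n \<otimes> ob) = pi ob" using pi_eq_iff G by simp
    then show "x \<in> {x \<in> carrier G. pi x \<in> pi ` Ob}" using x G ob by auto
  qed
  moreover have "openin T (\<Union>((\<lambda>n. (\<lambda>ob. n \<otimes> ob) ` Ob) ` N))"
    using Ob NG by (intro openin_Union) (auto intro: open_lmult)
  ultimately show "openin T {x \<in> carrier G. pi x \<in> pi ` Ob}" by simp
qed

lemma QT_tg: "topological_group QG QT"
  unfolding topological_group_def
proof (intro conjI)
  show "group QG" by (rule QG_group)
  show "topspace QT = carrier QG" by simp
  show "continuous_map (prod_topology QT QT) QT (\<lambda>p. fst p \<otimes>\<^bsub>QG\<^esub> snd p)"
    unfolding continuous_map_def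
  proof (intro conjI allI impI)
    show "(\<lambda>p. fst p \<otimes>\<^bsub>QG\<^esub> snd p) \<in> topspace (prod_topology QT QT) \<rightarrow> topspace QT"
      using QG_sub pi_G by auto
    fix A assume A: "openin QT A"
    define S where "S = {p \<in> topspace (prod_topology QT QT). fst p \<otimes>\<^bsub>QG\<^esub> snd p \<in> A}"
    have P: "openin T {z \<in> carrier G. pi z \<in> A}" using A openin_QT by blast
    show "openin (prod_topology QT QT) S"
      unfolding openin_prod_topology_alt
    proof (intro allI impI)
      fix a b assume ab: "(a, b) \<in> S"
      then obtain x y where xy: "x \<in> carrier G" "y \<in> carrier G" "a = pi x" "b = pi y"
        unfolding S_def by auto
      have "pi (pi x \<otimes> pi y) \<in> A" using ab xy unfolding S_def by simp
      then have "pi (x \<otimes> y) \<in> A" using piL piR xy pi_G by simp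
      then have "x \<otimes> y \<in> {z \<in> carrier G. pi z \<in> A}" using xy by simp
      then obtain A1 B1 where AB: "openin T A1" "openin T B1" "x \<in> A1" "y \<in> B1"
        "\<forall>p\<in>A1. \<forall>q\<in>B1. p \<otimes> q \<in> {z \<in> carrier G. pi z \<in> A}"
        using mult_nbhd[OF P xy(1,2)] by blast
      have A1G: "A1 \<subseteq> carrier G" and B1G: "B1 \<subseteq> carrier G" using AB openin_sub by auto
      have "pi ` A1 \<times> pi ` B1 \<subseteq> S"
      proof
        fix p assume "p \<in> pi ` A1 \<times> pi ` B1"
        then obtain u v where uv: "u \<in> A1" "v \<in> B1" "p = (pi u, pi v)" by blast
        have G: "u \<in> carrier G" "v \<in> carrier G" using uv A1G B1G by auto
        have "pi (pi u \<otimes> pi v) = pi (u \<otimes> v)" using piL piR G pi_G by simp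
        also have "\<dots> \<in> A" using AB(5) uv by blast
        finally show "p \<in> S" unfolding S_def using uv G by auto
      qed
      moreover have "openin QT (pi ` A1)" "openin QT (pi ` B1)" using pi_open AB by auto
      moreover have "a \<in> pi ` A1" "b \<in> pi ` B1" using xy AB by auto
      ultimately show "\<exists>U V. openin QT U \<and> openin QT V \<and> a \<in> U \<and> b \<in> V \<and> U \<times> V \<subseteq> S"
        by blast
    qed
  qed
  show "continuous_map QT QT (\<lambda>x. inv\<^bsub>QG\<^esub> x)"
    unfolding continuous_map_def
  proof (intro conjI allI impI)
    show "(\<lambda>x. inv\<^bsub>QG\<^esub> x) \<in> topspace QT \<rightarrow> topspace QT"
      using group.inv_closed[OF QG_group] by auto
    fix A assume A: "openin QT A"
    have P: "openin T {z \<in> carrier G. pi z \<in> A}" using A openin_QT by blast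
    have P2: "openin T {x \<in> topspace T. inv x \<in> {z \<in> carrier G. pi z \<in> A}}"
      by (rule openin_continuous_map_preimage[OF cont_inv P])
    have "{a \<in> topspace QT. inv\<^bsub>QG\<^esub> a \<in> A} = pi ` {x \<in> topspace T. inv x \<in> {z \<in> carrier G. pi z \<in> A}}"
    proof (intro equalityI subsetI)
      fix a assume "a \<in> {a \<in> topspace QT. inv\<^bsub>QG\<^esub> a \<in> A}"
      then obtain z where z: "z \<in> carrier G" "a = pi z" "inv\<^bsub>QG\<^esub> a \<in> A" by auto
      then have "pi (inv z) \<in> A" using QG_inv by simp
      then show "a \<in> pi ` {x \<in> topspace T. inv x \<in> {z \<in> carrier G. pi z \<in> A}}" using z by auto
    next
      fix a assume "a \<in> pi ` {x \<in> topspace T. inv x \<in> {z \<in> carrier G. pi z \<in> A}}"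
      then obtain z where z: "z \<in> carrier G" "a = pi z" "pi (inv z) \<in> A" by auto
      then show "a \<in> {a \<in> topspace QT. inv\<^bsub>QG\<^esub> a \<in> A}" using QG_inv by simp
    qed
    then show "openin QT {a \<in> topspace QT. inv\<^bsub>QG\<^esub> a \<in> A}" using pi_open[OF P2] by simp
  qed
qed

lemma QT_Lindelof: "Lindelof_space T \<Longrightarrow> Lindelof_space QT"
  using Lindelof_space_continuous_map_image[OF _ pi_cont] by simp

lemma QT_Hausdorff: "Hausdorff_space QT"
proof -
  interpret Q: tgrp QG QT
    using QT_tg QG_group by (simp add: tgrp_def tgrp_axioms_def)
  show ?thesis
  proof (rule Q.Hausdorff_if_closed_one)
    fix a assume "a \<in> carrier QG"
    then obtain z where z: "z \<in> carrier G" "a = pi z" by auto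
    have C: "closedin T {x \<in> topspace T. x \<otimes> inv z \<in> N}"
      using closedin_continuous_map_preimage[OF cont_rmult Ncl] z by simp
    have "{x \<in> carrier G. pi x \<in> pi ` carrier G - {a}} = topspace T - {x \<in> topspace T. x \<otimes> inv z \<in> N}"
      using pi_eq_iff z by auto
    moreover have "openin T (carrier G - {x \<in> carrier G. x \<otimes> inv z \<in> N})"
      using C unfolding closedin_def by simp
    ultimately have "openin QT (topspace QT - {a})" unfolding openin_QT by auto
    then show "closedin QT {a}" unfolding closedin_def using z by auto
  qed
qed

lemma QT_bd: assumes bd: "basically_disconnected T" shows "basically_disconnected QT"
  unfolding basically_disconnected_def
proof (intro allI impI)
  fix U assume "cozero_set_in QT U"
  then obtain f where f: "continuous_map QT euclideanreal f" "U = {x \<in> topspace QT. f x \<noteq> 0}"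
    unfolding cozero_set_in_def by blast
  define P where "P = {x \<in> topspace T. f (pi x) \<noteq> 0}"
  have "continuous_map T euclideanreal (f \<circ> pi)" using continuous_map_compose[OF pi_cont f(1)] .
  then have "cozero_set_in T P" unfolding cozero_set_in_def P_def by auto
  then have Po: "openin T (T closure_of P)" using bd unfolding basically_disconnected_def by blast
  have piP: "pi ` P \<subseteq> U" unfolding P_def f(2) by auto
  have eq: "{x \<in> carrier G. pi x \<in> QT closure_of U} = T closure_of P"
  proof (intro equalityI subsetI)
    fix x assume x: "x \<in> {x \<in> carrier G. pi x \<in> QT closure_of U}"
    show "x \<in> T closure_of P"
      unfolding in_closure_of
    proof (intro conjI allI impI)
      show "x \<in> topspace T" using x by simp
      fix Ob assume Ob: "x \<in> Ob \<and> openin T Ob"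
      have "\<forall>T'. pi x \<in> T' \<and> openin QT T' \<longrightarrow> (\<exists>y. y \<in> U \<and> y \<in> T')"
        using x unfolding in_closure_of by blast
      moreover have "pi x \<in> pi ` Ob" "openin QT (pi ` Ob)" using Ob pi_open by auto
      ultimately obtain y where y: "y \<in> U" "y \<in> pi ` Ob" by meson
      then obtain ob where ob: "ob \<in> Ob" "y = pi ob" by blast
      have "ob \<in> topspace T" using ob Ob openin_subset by blast
      then have "ob \<in> P" using y ob f(2) unfolding P_def by simp
      then show "\<exists>y. y \<in> P \<and> y \<in> Ob" using ob by blast
    qed
  next
    fix x assume x: "x \<in> T closure_of P"
    then have xG: "x \<in> carrier G" using closure_of_subset_topspace by fastforce
    have "pi x \<in> QT closure_of (pi ` P)"
      using continuous_map_image_closure_subset[OF pi_cont, of P] x by blast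
    also have "\<dots> \<subseteq> QT closure_of U" using closure_of_mono[OF piP] .
    finally show "x \<in> {x \<in> carrier G. pi x \<in> QT closure_of U}" using xG by simp
  qed
  show "openin QT (QT closure_of U)"
    unfolding openin_QT using eq Po closure_of_subset_topspace[of QT U] by simp
qed

end




primrec levs :: "(nat \<Rightarrow> 'a set) \<Rightarrow> ('a set \<Rightarrow> 'a set) \<Rightarrow> ('a set \<Rightarrow> nat \<Rightarrow> 'a set) \<Rightarrow> nat \<Rightarrow> 'a set set" where
  "levs B s g 0 = range B"
| "levs B s g (Suc k) = levs B s g k \<union> s ` levs B s g k \<union> (\<Union>U\<in>levs B s g k. range (g U))"

context tgrp
begin

lemma sqrt_nb:
  assumes "openin T U" "\<one> \<in> U"
  shows "\<exists>V. openin T V \<and> \<one> \<in> V \<and> (\<forall>a\<in>V. inv a \<in> V) \<and> (\<forall>a\<in>V. \<forall>b\<in>V. a \<otimes> b \<in> U)"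
proof -
  obtain A B where AB: "openin T A" "openin T B" "\<one> \<in> A" "\<one> \<in> B"
    "\<forall>a\<in>A. \<forall>b\<in>B. a \<otimes> b \<in> U"
    using mult_nbhd[OF assms(1) one_closed one_closed] assms(2) by auto
  define V0 where "V0 = A \<inter> B"
  define V where "V = V0 \<inter> (\<lambda>x. inv x) ` V0"
  have V0o: "openin T V0" unfolding V0_def using AB by blast
  have Vo: "openin T V" unfolding V_def using V0o open_inv by blast
  have V0G: "V0 \<subseteq> carrier G" using V0o openin_sub by blast
  have V1: "\<one> \<in> V" unfolding V_def V0_def using AB(3,4) by (metis IntI image_eqI inv_one)
  have Vi: "inv a \<in> V" if a: "a \<in> V" for a
  proof -
    obtain b where b: "b \<in> V0" "a = inv b" using a unfolding V_def by blast
    have "inv a = b" using b V0G by auto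
    moreover have "a \<in> V0" using a unfolding V_def by blast
    moreover have "b = inv (inv b)" using b V0G by auto
    ultimately have "b \<in> (\<lambda>x. inv x) ` V0" using b by blast
    then show ?thesis using b \<open>inv a = b\<close> unfolding V_def by auto
  qed
  have "a \<otimes> b \<in> U" if "a \<in> V" "b \<in> V" for a b
    using AB(5) that unfolding V_def V0_def by blast
  then show ?thesis using Vo V1 Vi by blast
qed

lemma guran:
  assumes Lin: "Lindelof_space T" and U: "openin T U" "\<one> \<in> U"
  shows "\<exists>Q::nat \<Rightarrow> 'a set. (\<forall>i. openin T (Q i) \<and> \<one> \<in> Q i) \<and>
           (\<forall>g\<in>carrier G. \<exists>i. \<forall>a\<in>Q i. g \<otimes> a \<otimes> inv g \<in> U)"
proof -
  have ex: "\<exists>Q. openin T Q \<and> \<one> \<in> Q \<and> (\<forall>q\<in>Q. \<forall>r\<in>Q. y \<otimes> (q \<otimes> r \<otimes> inv q) \<otimes> inv y \<in> U)"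
    if y: "y \<in> carrier G" for y
  proof -
    define P where "P = {z \<in> topspace T. y \<otimes> z \<otimes> inv y \<in> U}"
    have "continuous_map T T (\<lambda>z. y \<otimes> z \<otimes> inv y)"
      using continuous_map_compose[OF cont_lmult[OF y] cont_rmult[of "inv y"]] y by (simp add: o_def)
    then have Po: "openin T P" unfolding P_def using U(1) by (rule openin_continuous_map_preimage)
    have P1: "\<one> \<in> P" unfolding P_def using y U(2) by simp
    obtain A B where AB: "openin T A" "openin T B" "\<one> \<in> A" "\<one> \<in> B"
      "\<forall>a\<in>A. \<forall>b\<in>B. a \<otimes> b \<in> P"
      using mult_nbhd[OF Po one_closed one_closed] P1 by auto
    obtain A' B' where AB': "openin T A'" "openin T B'" "\<one> \<in> A'" "\<one> \<in> B'"
      "\<forall>a\<in>A'. \<forall>b\<in>B'. a \<otimes> b \<in> A"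
      using mult_nbhd[OF AB(1) one_closed one_closed] AB(3) by auto
    define Q where "Q = A' \<inter> B' \<inter> (\<lambda>x. inv x) ` B"
    have Qo: "openin T Q" unfolding Q_def using AB AB' open_inv by blast
    have Q1: "\<one> \<in> Q" unfolding Q_def using AB(4) AB'(3,4) by (metis IntI image_eqI inv_one)
    have BG: "B \<subseteq> carrier G" using AB(2) openin_sub by blast
    have "y \<otimes> (q \<otimes> r \<otimes> inv q) \<otimes> inv y \<in> U" if qr: "q \<in> Q" "r \<in> Q" for q r
    proof -
      have "q \<otimes> r \<in> A" using AB'(5) qr unfolding Q_def by blast
      moreover obtain b where b: "b \<in> B" "q = inv b" using qr(1) unfolding Q_def by blast
      then have "inv q \<in> B" using BG by auto
      ultimately have "q \<otimes> r \<otimes> inv q \<in> P" using AB(5) by blast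
      then show ?thesis unfolding P_def by simp
    qed
    then show ?thesis using Qo Q1 by blast
  qed
  then obtain Qf where Qf: "\<And>y. y \<in> carrier G \<Longrightarrow> openin T (Qf y) \<and> \<one> \<in> Qf y \<and>
      (\<forall>q\<in>Qf y. \<forall>r\<in>Qf y. y \<otimes> (q \<otimes> r \<otimes> inv q) \<otimes> inv y \<in> U)"
    by metis
  define \<U> where "\<U> = (\<lambda>y. (\<lambda>q. y \<otimes> q) ` Qf y) ` carrier G"
  have Uo: "openin T V" if "V \<in> \<U>" for V using that Qf open_lmult unfolding \<U>_def by blast
  have Ucov: "\<Union>\<U> = topspace T"
  proof (intro equalityI subsetI)
    fix x assume "x \<in> \<Union>\<U>" then show "x \<in> topspace T" using Uo openin_subset by blast
  next
    fix x assume x: "x \<in> topspace T"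
    then have xG: "x \<in> carrier G" by simp
    have "x = x \<otimes> \<one>" using xG by simp
    then have "x \<in> (\<lambda>q. x \<otimes> q) ` Qf x" using Qf[OF xG] by blast
    then show "x \<in> \<Union>\<U>" unfolding \<U>_def using xG by blast
  qed
  have "\<exists>\<V>. countable \<V> \<and> \<V> \<subseteq> \<U> \<and> \<Union>\<V> = topspace T"
    by (rule Lindelof_spaceD[OF Lin Uo Ucov])
  then obtain \<V> where V: "countable \<V>" "\<V> \<subseteq> \<U>" "\<Union>\<V> = topspace T"
    by (elim exE conjE)
  have "\<exists>Y. countable Y \<and> Y \<subseteq> carrier G \<and> \<V> = (\<lambda>y. (\<lambda>q. y \<otimes> q) ` Qf y) ` Y"
    by (rule countable_subset_image[THEN iffD1, OF conjI[OF V(1) V(2)[unfolded \<U>_def]]])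
  then obtain Y where Y: "countable Y" "Y \<subseteq> carrier G" "\<V> = (\<lambda>y. (\<lambda>q. y \<otimes> q) ` Qf y) ` Y"
    by (elim exE conjE)
  have Yne: "Y \<noteq> {}" using V(3) Y(3) by auto
  define Q where "Q i = Qf (from_nat_into Y i)" for i
  show ?thesis
  proof (intro exI[of _ Q] conjI allI ballI)
    fix i
    have "from_nat_into Y i \<in> carrier G" using from_nat_into[OF Yne] Y(2) by blast
    then show "openin T (Q i)" "\<one> \<in> Q i" unfolding Q_def using Qf by auto
  next
    fix g assume g: "g \<in> carrier G"
    then have "g \<in> \<Union>\<V>" using V(3) by simp
    then obtain y q where yq: "y \<in> Y" "q \<in> Qf y" "g = y \<otimes> q" using Y(3) by blast
    obtain i where i: "from_nat_into Y i = y" using from_nat_into_surj[OF Y(1) yq(1)] by blast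
    have yG: "y \<in> carrier G" using yq Y(2) by blast
    have qG: "q \<in> carrier G" using yq(2) Qf[OF yG] openin_sub by blast
    have "\<forall>a\<in>Q i. g \<otimes> a \<otimes> inv g \<in> U"
    proof
      fix a assume a: "a \<in> Q i"
      then have a': "a \<in> Qf y" using i unfolding Q_def by simp
      have aG: "a \<in> carrier G" using a' Qf[OF yG] openin_sub by blast
      have "g \<otimes> a \<otimes> inv g = y \<otimes> (q \<otimes> a \<otimes> inv q) \<otimes> inv y"
        using yG qG aG yq(3) by (simp add: inv_mult_group m_assoc)
      also have "\<dots> \<in> U" using Qf[OF yG] yq(2) a' by blast
      finally show "g \<otimes> a \<otimes> inv g \<in> U" .
    qed
    then show "\<exists>i. \<forall>a\<in>Q i. g \<otimes> a \<otimes> inv g \<in> U" by blast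
  qed
qed

lemma quotient_exists:
  assumes Lin: "Lindelof_space T" and bd: "basically_disconnected T"
    and Hd: "Hausdorff_space T" and nP: "\<not> P_space T"
  shows "\<exists>(H :: 'a monoid) TH. topological_group H TH \<and> TH \<noteq> discrete_topology (topspace TH) \<and>
       Lindelof_space TH \<and> basically_disconnected TH \<and> Hausdorff_space TH \<and>
       countable_pseudocharacter H TH"
proof -
  obtain S where S: "gdelta_in T S" "\<not> openin T S" using nP unfolding P_space_def by blast
  obtain \<O> where O: "countable \<O>" "\<O> \<subseteq> Collect (openin T)" "\<Inter>\<O> = S"
    using S(1) unfolding gdelta_in_alt intersection_of_def by blast
  have SG: "S \<subseteq> carrier G" using S(1) gdelta_in_subset by fastforce
  have One: "\<O> \<noteq> {}"
  proof
    assume "\<O> = {}"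
    then have "S = UNIV" using O(3) by simp
    then have "S = topspace T" using SG by auto
    then show False using S(2) openin_topspace[of T] by simp
  qed
  obtain x where xS: "x \<in> S" and xn: "\<And>O'. openin T O' \<Longrightarrow> x \<in> O' \<Longrightarrow> \<not> O' \<subseteq> S"
    using S(2) openin_subopen[of T S] by blast
  have xG: "x \<in> carrier G" using xS SG by blast
  define Oseq where "Oseq n = (\<lambda>z. inv x \<otimes> z) ` (from_nat_into \<O> n)" for n
  have fO: "from_nat_into \<O> n \<in> \<O>" for n using from_nat_into[OF One] .
  have fOo: "openin T (from_nat_into \<O> n)" for n using fO O(2) by blast
  have Oseq_nb: "openin T (Oseq n) \<and> \<one> \<in> Oseq n" for n
  proof
    show "openin T (Oseq n)" unfolding Oseq_def using open_lmult[OF fOo] xG by simp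
    have "x \<in> from_nat_into \<O> n" using xS O(3) fO[of n] by blast
    moreover have "\<one> = inv x \<otimes> x" using xG by simp
    ultimately show "\<one> \<in> Oseq n" unfolding Oseq_def by blast
  qed
  have key: "False" if P: "openin T P" "\<one> \<in> P" "\<And>n. P \<subseteq> Oseq n" for P
  proof -
    have "openin T ((\<lambda>z. x \<otimes> z) ` P)" using open_lmult[OF P(1) xG] .
    moreover have "x \<in> (\<lambda>z. x \<otimes> z) ` P"
    proof -
      have "x = x \<otimes> \<one>" using xG by simp
      then show ?thesis using P(2) by blast
    qed
    moreover have "(\<lambda>z. x \<otimes> z) ` P \<subseteq> S"
    proof
      fix w assume "w \<in> (\<lambda>z. x \<otimes> z) ` P"
      then obtain p where p: "p \<in> P" "w = x \<otimes> p" by blast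
      have "w \<in> from_nat_into \<O> n" for n
      proof -
        have "p \<in> Oseq n" using P(3) p(1) by blast
        then obtain u where u: "u \<in> from_nat_into \<O> n" "p = inv x \<otimes> u" unfolding Oseq_def by blast
        have "u \<in> carrier G" using u(1) fOo openin_sub by blast
        then have "w = u" using p(2) u(2) xG by simp
        then show ?thesis using u(1) by simp
      qed
      then have "w \<in> \<Inter>(range (from_nat_into \<O>))" by blast
      then show "w \<in> S" using range_from_nat_into[OF One O(1)] O(3) by simp
    qed
    ultimately show False using xn by blast
  qed
  define nb where "nb U \<longleftrightarrow> openin T U \<and> \<one> \<in> U" for U
  have "\<exists>V. nb U \<longrightarrow> (nb V \<and> (\<forall>a\<in>V. inv a \<in> V) \<and> (\<forall>a\<in>V. \<forall>b\<in>V. a \<otimes> b \<in> U))" for U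
  proof (cases "nb U")
    case True
    then obtain V where "openin T V \<and> \<one> \<in> V \<and> (\<forall>a\<in>V. inv a \<in> V) \<and> (\<forall>a\<in>V. \<forall>b\<in>V. a \<otimes> b \<in> U)"
      using sqrt_nb unfolding nb_def by presburger
    then show ?thesis unfolding nb_def by blast
  qed simp
  then obtain sq where sq: "\<And>U. nb U \<Longrightarrow> nb (sq U) \<and> (\<forall>a\<in>sq U. inv a \<in> sq U) \<and>
      (\<forall>a\<in>sq U. \<forall>b\<in>sq U. a \<otimes> b \<in> U)" by metis
  have "\<exists>Q::nat \<Rightarrow> 'a set. nb U \<longrightarrow> ((\<forall>i. nb (Q i)) \<and>
           (\<forall>g\<in>carrier G. \<exists>i. \<forall>a\<in>Q i. g \<otimes> a \<otimes> inv g \<in> U))" for U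
  proof (cases "nb U")
    case True
    then obtain Q :: "nat \<Rightarrow> 'a set" where "(\<forall>i. openin T (Q i) \<and> \<one> \<in> Q i) \<and>
           (\<forall>g\<in>carrier G. \<exists>i. \<forall>a\<in>Q i. g \<otimes> a \<otimes> inv g \<in> U)"
      using guran[OF Lin] unfolding nb_def by presburger
    then show ?thesis unfolding nb_def by blast
  qed simp
  then have "\<forall>U. \<exists>Q::nat \<Rightarrow> 'a set. nb U \<longrightarrow> ((\<forall>i. nb (Q i)) \<and>
           (\<forall>g\<in>carrier G. \<exists>i. \<forall>a\<in>Q i. g \<otimes> a \<otimes> inv g \<in> U))" by blast
  then have "\<exists>gam :: 'a set \<Rightarrow> nat \<Rightarrow> 'a set. \<forall>U. nb U \<longrightarrow> ((\<forall>i. nb (gam U i)) \<and>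
           (\<forall>g\<in>carrier G. \<exists>i. \<forall>a\<in>gam U i. g \<otimes> a \<otimes> inv g \<in> U))" by (rule choice)
  then obtain gam :: "'a set \<Rightarrow> nat \<Rightarrow> 'a set" where gam0: "\<forall>U. nb U \<longrightarrow> ((\<forall>i. nb (gam U i)) \<and>
           (\<forall>g\<in>carrier G. \<exists>i. \<forall>a\<in>gam U i. g \<otimes> a \<otimes> inv g \<in> U))" by (elim exE)
  have gam: "(\<forall>i. nb (gam U i)) \<and> (\<forall>g\<in>carrier G. \<exists>i. \<forall>a\<in>gam U i. g \<otimes> a \<otimes> inv g \<in> U)"
    if "nb U" for U using gam0 that by blast
  define L where "L = levs Oseq sq gam"
  define NN where "NN = (\<Union>k. L k)"
  have Lcount: "countable (L k)" for k
    by (induction k) (simp_all add: L_def)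
  have Lnb: "\<forall>U\<in>L k. nb U" for k
  proof (induction k)
    case 0 then show ?case using Oseq_nb unfolding L_def nb_def by auto
  next
    case (Suc k) then show ?case using sq gam unfolding L_def by auto
  qed
  have NNcount: "countable NN" unfolding NN_def using Lcount by blast
  have NNnb: "nb U" if "U \<in> NN" for U using that Lnb unfolding NN_def by blast
  have NNsq: "sq U \<in> NN" if U: "U \<in> NN" for U
  proof -
    obtain k where "U \<in> L k" using U unfolding NN_def by blast
    then have "sq U \<in> L (Suc k)" unfolding L_def by simp
    then show ?thesis unfolding NN_def by blast
  qed
  have NNgam: "gam U i \<in> NN" if U: "U \<in> NN" for U i
  proof -
    obtain k where "U \<in> L k" using U unfolding NN_def by blast
    then have "gam U i \<in> L (Suc k)" unfolding L_def by auto
    then show ?thesis unfolding NN_def by blast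
  qed
  have NNO: "Oseq n \<in> NN" for n
  proof -
    have "Oseq n \<in> L 0" unfolding L_def by simp
    then show ?thesis unfolding NN_def by blast
  qed
  have NNne: "NN \<noteq> {}" using NNO by blast
  have sqU: "sq U \<subseteq> U" if "nb U" for U
  proof
    fix a assume a: "a \<in> sq U"
    have "nb (sq U)" using sq[OF that] by blast
    then have "\<one> \<in> sq U" unfolding nb_def by blast
    then have "a \<otimes> \<one> \<in> U" using sq[OF that] a by blast
    moreover have "a \<in> carrier G" using a \<open>nb (sq U)\<close> openin_sub unfolding nb_def by blast
    ultimately show "a \<in> U" by simp
  qed
  define N where "N = \<Inter>NN"
  have NG: "N \<subseteq> carrier G"
  proof -
    have "Oseq 0 \<subseteq> carrier G" using Oseq_nb openin_sub by blast
    then show ?thesis unfolding N_def using NNO[of 0] by blast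
  qed
  have N1: "\<one> \<in> N" unfolding N_def using NNnb unfolding nb_def by blast
  have Nm: "x \<otimes> y \<in> N" if "x \<in> N" "y \<in> N" for x y
    unfolding N_def
  proof
    fix U assume U: "U \<in> NN"
    have "x \<in> sq U" "y \<in> sq U" using that NNsq[OF U] unfolding N_def by blast+
    then show "x \<otimes> y \<in> U" using sq[OF NNnb[OF U]] by blast
  qed
  have Ni: "inv x \<in> N" if "x \<in> N" for x
    unfolding N_def
  proof
    fix U assume U: "U \<in> NN"
    have "x \<in> sq U" using that NNsq[OF U] unfolding N_def by blast
    then have "inv x \<in> sq U" using sq[OF NNnb[OF U]] by blast
    then show "inv x \<in> U" using sqU[OF NNnb[OF U]] by blast
  qed
  have Nc: "g \<otimes> x \<otimes> inv g \<in> N" if gx: "g \<in> carrier G" "x \<in> N" for g x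
    unfolding N_def
  proof
    fix U assume U: "U \<in> NN"
    obtain i where i: "\<forall>a\<in>gam U i. g \<otimes> a \<otimes> inv g \<in> U" using gam[OF NNnb[OF U]] gx(1) by blast
    have "x \<in> gam U i" using gx(2) NNgam[OF U] unfolding N_def by blast
    then show "g \<otimes> x \<otimes> inv g \<in> U" using i by blast
  qed
  have Ncl: "closedin T N"
  proof -
    have "openin T (topspace T - N)"
    proof (subst openin_subopen, intro ballI)
      fix y assume y: "y \<in> topspace T - N"
      then have yG: "y \<in> carrier G" by simp
      obtain U where U: "U \<in> NN" "y \<notin> U" using y unfolding N_def by blast
      define V where "V = sq U"
      have Vnb: "nb V" unfolding V_def using sq[OF NNnb[OF U(1)]] by blast
      have VG: "V \<subseteq> carrier G" using Vnb openin_sub unfolding nb_def by blast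
      have NV: "N \<subseteq> V" unfolding N_def V_def using NNsq[OF U(1)] by blast
      have "(\<lambda>v. y \<otimes> v) ` V \<subseteq> topspace T - N"
      proof
        fix w assume "w \<in> (\<lambda>v. y \<otimes> v) ` V"
        then obtain v where v: "v \<in> V" "w = y \<otimes> v" by blast
        have vG: "v \<in> carrier G" using v VG by blast
        show "w \<in> topspace T - N"
        proof
          show "w \<in> topspace T" using v yG vG by simp
          show "w \<notin> N"
          proof
            assume "w \<in> N"
            then have "w \<in> V" using NV by blast
            moreover have "inv v \<in> V" using sq[OF NNnb[OF U(1)]] v(1) unfolding V_def by blast
            ultimately have "w \<otimes> inv v \<in> U" using sq[OF NNnb[OF U(1)]] unfolding V_def by blast
            moreover have "w \<otimes> inv v = y" using v yG vG by simp
            ultimately show False using U(2) by simp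
          qed
        qed
      qed
      moreover have "openin T ((\<lambda>v. y \<otimes> v) ` V)" using open_lmult[OF _ yG] Vnb unfolding nb_def by blast
      moreover have "y \<in> (\<lambda>v. y \<otimes> v) ` V"
      proof -
        have "y = y \<otimes> \<one>" using yG by simp
        then show ?thesis using Vnb unfolding nb_def by blast
      qed
      ultimately show "\<exists>T'. openin T T' \<and> y \<in> T' \<and> T' \<subseteq> topspace T - N" by blast
    qed
    then show ?thesis unfolding closedin_def using NG by simp
  qed
  interpret Q: qsetup G T N
    by (unfold_locales) (use NG N1 Nm Ni Nc Ncl in auto)
  have cpQ: "countable_pseudocharacter Q.QG Q.QT"
    unfolding countable_pseudocharacter_def gdelta_in_alt
  proof
    show "{\<one>\<^bsub>Q.QG\<^esub>} \<subseteq> topspace Q.QT" by simp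
    show "(countable intersection_of openin Q.QT) {\<one>\<^bsub>Q.QG\<^esub>}"
      unfolding intersection_of_def
    proof (intro exI conjI)
      show "countable ((\<lambda>U. Q.pi ` U) ` NN)" using NNcount by simp
      show "(\<lambda>U. Q.pi ` U) ` NN \<subseteq> Collect (openin Q.QT)"
        using NNnb Q.pi_open unfolding nb_def by auto
      show "\<Inter>((\<lambda>U. Q.pi ` U) ` NN) = {\<one>\<^bsub>Q.QG\<^esub>}"
      proof (intro equalityI subsetI)
        fix a assume a: "a \<in> \<Inter>((\<lambda>U. Q.pi ` U) ` NN)"
        have "a \<in> Q.pi ` Oseq 0" using a NNO[of 0] by blast
        then obtain z where z: "z \<in> carrier G" "a = Q.pi z"
          using Oseq_nb openin_sub by blast
        have aG: "a \<in> carrier G" using z Q.pi_G by simp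
        have pa: "Q.pi a = a" using z Q.pi_pi by simp
        have "a \<in> U" if U: "U \<in> NN" for U
        proof -
          have "a \<in> Q.pi ` (sq U)" using a NNsq[OF U] by blast
          then obtain v where v: "v \<in> sq U" "a = Q.pi v" by blast
          have vG: "v \<in> carrier G" using v(1) sq[OF NNnb[OF U]] openin_sub unfolding nb_def by blast
          have "Q.pi a = Q.pi v" using pa v by simp
          then have "a \<otimes> inv v \<in> N" using Q.pi_eq_iff[OF aG vG] by simp
          then have "a \<otimes> inv v \<in> sq U" unfolding N_def using NNsq[OF U] by blast
          then have "(a \<otimes> inv v) \<otimes> v \<in> U" using sq[OF NNnb[OF U]] v(1) by blast
          then show ?thesis using aG vG by simp
        qed
        then have "a \<in> N" unfolding N_def by blast
        then have "Q.pi a = Q.pi \<one>" using Q.pi_eq_iff[OF aG one_closed] aG by simp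
        then show "a \<in> {\<one>\<^bsub>Q.QG\<^esub>}" using pa by simp
      next
        fix a assume "a \<in> {\<one>\<^bsub>Q.QG\<^esub>}"
        then have "a = Q.pi \<one>" by simp
        then show "a \<in> \<Inter>((\<lambda>U. Q.pi ` U) ` NN)" using NNnb unfolding nb_def by blast
      qed
    qed
  qed
  have ndQ: "Q.QT \<noteq> discrete_topology (topspace Q.QT)"
  proof
    assume "Q.QT = discrete_topology (topspace Q.QT)"
    then have "openin Q.QT {Q.pi \<one>}" by (metis discrete_topology_unique Q.topspace_QT image_eqI one_closed)
    then have o: "openin T {x \<in> carrier G. Q.pi x \<in> {Q.pi \<one>}}" unfolding Q.openin_QT by blast
    have "{x \<in> carrier G. Q.pi x \<in> {Q.pi \<one>}} = N" using Q.pi_eq_iff NG by auto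
    then have "openin T N" using o by simp
    moreover have "N \<subseteq> Oseq n" for n unfolding N_def using NNO by blast
    ultimately show False using key N1 by blast
  qed
  show ?thesis
    using Q.QT_tg ndQ Q.QT_Lindelof[OF Lin] Q.QT_bd[OF bd] Q.QT_Hausdorff cpQ by blast
qed

end


theorem corollary2:
  "(\<exists>(G :: 'a monoid) T. topological_group G T \<and> Lindelof_space T \<and>
       basically_disconnected T \<and> Hausdorff_space T \<and> \<not> P_space T)
   \<longleftrightarrow>
   (\<exists>(G :: 'a monoid) T. topological_group G T \<and> T \<noteq> discrete_topology (topspace T) \<and>
       Lindelof_space T \<and> boolean_group G \<and> basically_disconnected T \<and>
       Hausdorff_space T \<and> countable_pseudocharacter G T)"
proof
  assume "\<exists>(G :: 'a monoid) T. topological_group G T \<and> Lindelof_space T \<and>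
       basically_disconnected T \<and> Hausdorff_space T \<and> \<not> P_space T"
  then obtain G :: "'a monoid" and T where GT: "topological_group G T" "Lindelof_space T"
    "basically_disconnected T" "Hausdorff_space T" "\<not> P_space T" by blast
  interpret tgrp G T
    using GT(1) by (simp add: tgrp_def tgrp_axioms_def topological_group_def)
  obtain H :: "'a monoid" and TH where H: "topological_group H TH" "TH \<noteq> discrete_topology (topspace TH)"
    "Lindelof_space TH" "basically_disconnected TH" "Hausdorff_space TH" "countable_pseudocharacter H TH"
    using quotient_exists[OF GT(2-5)] by blast
  show "\<exists>(G :: 'a monoid) T. topological_group G T \<and> T \<noteq> discrete_topology (topspace T) \<and>
       Lindelof_space T \<and> boolean_group G \<and> basically_disconnected T \<and>
       Hausdorff_space T \<and> countable_pseudocharacter G T"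
    by (rule B_final[OF H])
next
  assume "\<exists>(G :: 'a monoid) T. topological_group G T \<and> T \<noteq> discrete_topology (topspace T) \<and>
       Lindelof_space T \<and> boolean_group G \<and> basically_disconnected T \<and>
       Hausdorff_space T \<and> countable_pseudocharacter G T"
  then obtain G :: "'a monoid" and T where GT: "topological_group G T"
    "T \<noteq> discrete_topology (topspace T)" "Lindelof_space T" "basically_disconnected T"
    "Hausdorff_space T" "countable_pseudocharacter G T" by blast
  interpret tgrp G T
    using GT(1) by (simp add: tgrp_def tgrp_axioms_def topological_group_def)
  have "\<not> P_space T"
  proof
    assume "P_space T"
    then have "openin T {\<one>\<^bsub>G\<^esub>}" using GT(6) unfolding P_space_def countable_pseudocharacter_def by blast
    then show False using singleton_open_discrete GT(2) by blast
  qed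
  then show "\<exists>(G :: 'a monoid) T. topological_group G T \<and> Lindelof_space T \<and>
       basically_disconnected T \<and> Hausdorff_space T \<and> \<not> P_space T"
    using GT by blast
qed

end
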